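(* Let $m,n\ge0$. (a) For $I\subseteq[m-1]$ and $J\subseteq[n-1]$, $\mathrm{ch}_\nu(\mathbf m(\dot\chi^I(\nu),\dot\chi^J(\nu)))=L_{\mathrm{comp}(I)}L_{\mathrm{comp}(J)}$. (b) For $I\subseteq[n-1]$, $(\mathrm{ch}_\nu\otimes\mathrm{ch}_\nu)(\blacktriangle(\dot\chi^I(\nu)))=\triangle(L_{\mathrm{comp}(I)})$, where $\triangle$ is the coproduct of $\mathsf{QSym}$.
   Context: Fix an integer $\nu>1$; $C_\nu$ is the additive cyclic group of order $\nu$. $[a,b]=\{t\in\mathbb Z:a\le t\le b\}$ (empty if $a>b$), $[n]=[1,n]$. $Q_S(\nu)=\bigoplus_{s\in S}C_\nu$ for finite $S\subset\mathbb Z_{>0}$; $Q_n(\nu)=Q_{[n-1]}(\nu)$ (trivial for $n\le1$). $\psi_\nu(0)=1$, $\psi_\nu(g)=-1/(\nu-1)$ for $g\neq0$. For $I\subseteq[n-1]$, $\dot\chi^I(\nu)(\mathbf g)=\prod_{i\in[n-1]\setminus I}\psi_\nu(g_i)$; $\mathrm{scf}(\mathcal N_n(\nu))$ is the space of functions on $Q_n(\nu)$ whose value depends only on $\{i:g_i\ne0\}$, with basis $\{\dot\chi^I(\nu)\}$ ($\cong\mathbb C$ for $n\le1$). Compositions: a composition of $n$ is a tuple of positive integers summing to $n$; for $n\ge1$, $\mathrm{comp}(\{s_1<\dots<s_i\})=(s_1,s_2-s_1,\dots,n-s_i)$ is a bijection from subsets of $[n-1]$ to compositions of $n$, and for $n=0$,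 $\mathrm{comp}(\emptyset)$ is the empty composition. $\mathsf{QSym}$ has basis $M_\alpha=\sum_{j_1<\dots<j_l}x_{j_1}^{\alpha_1}\cdots x_{j_l}^{\alpha_l}$, coproduct $\triangle M_\alpha=\sum_{\beta\cdot\gamma=\alpha}M_\beta\otimes M_\gamma$ (concatenation); fundamental functions $L_{\mathrm{comp}(I)}=\sum_{I\subseteq J\subseteq[n-1]}M_{\mathrm{comp}(J)}$ ($L$ of the empty composition is $1$). $\mathrm{ch}_\nu:\bigoplus_{n\ge0}\mathrm{scf}(\mathcal N_n(\nu))\to\mathsf{QSym}$ is the linear map $\dot\chi^I(\nu)\mapsto L_{\mathrm{comp}(I)}$. Connectivity: for $A\subseteq[N]$, $\mathrm{conn}(A)$ = maximal subsets of consecutive integers of $A$; $A^c=[N]\setminus A$; $c_1(A)=\{\max B:B\in\mathrm{conn}(A)\}\setminus\{N\}$, $c_2(A)=\{\max B:B\in\mathrm{conn}(A^c)\}\setminus\{N\}$, $c(A)=c_1(A)\cup c_2(A)$. Product: for $A\subseteq[m+n]$, $|A|=n$, $A=\{b_1<\dots<b_n\}$, $[m+n]\setminus A=\{a_1<\dots<a_m\}$ ($N=m+n$), functions $\phi$ on $Q_m(\nu)$, $\psi$ on $Q_n(\nu)$: if $m=0$ or $n=0$, $\mathbf m_A(\phi,\psi)=\phi\psi$; otherwise $\mathbf m_A(\phi,\psi)(\mathbf g)=\prod_{i\in c_2(A)}\psi_\nu(g_i)\cdot s_A(\phi,\psi)(\mathbf g')$ with $s_A(\phi,\psi)(\mathbf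 h)=\phi(h_{a_1},\dots,h_{a_{m-1}})\psi_\nu(h_{a_m})\psi(h_{b_1},\dots,h_{b_{n-1}})\psi_\nu(h_{b_n})$ on $Q_{[m+n]}(\nu)$ and $\mathbf g'$ equal to $\mathbf g$ on $[m+n-1]\setminus c(A)$ and $0$ on $c(A)\cup\{m+n\}$. $\mathbf m=\sum_{A}\mathbf m_A$ over all $n$-subsets $A$ of $[m+n]$, extended bilinearly. Coproduct: for $\phi$ on $Q_n(\nu)$, $\blacktriangle_0(\phi)=1\otimes\phi$, $\blacktriangle_n(\phi)=\phi\otimes1$, and for $1\le k\le n-1$, $\blacktriangle_k(\phi)\in\mathrm{Fun}(Q_k(\nu))\otimes\mathrm{Fun}(Q_{n-k}(\nu))$ corresponds to $(\mathbf a,\mathbf b)\mapsto\phi(a_1,\dots,a_{k-1},0,b_1,\dots,b_{n-k-1})$; $\blacktriangle=\sum_{k=0}^n\blacktriangle_k$, extended linearly. *)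

theory Defs
  imports Complex_Main
begin

(* Elements of C_nu are represented by naturals 0..<nu (0 = identity).
   Elements of Q_S(nu) are functions g :: nat => nat with g i < nu on S and g i = 0 off S. *)
definition QS :: "nat \<Rightarrow> nat set \<Rightarrow> (nat \<Rightarrow> nat) set" where
  "QS \<nu> S = {g. (\<forall>i\<in>S. g i < \<nu>) \<and> (\<forall>i. i \<notin> S \<longrightarrow> g i = 0)}"

definition Qn :: "nat \<Rightarrow> nat \<Rightarrow> (nat \<Rightarrow> nat) set" where
  "Qn \<nu> n = QS \<nu> {1..<n}"

definition psi :: "nat \<Rightarrow> nat \<Rightarrow> complex" where
  "psi \<nu> x = (if x = 0 then 1 else - 1 / (of_nat \<nu> - 1))"

definition chi :: "nat \<Rightarrow> nat \<Rightarrow> nat set \<Rightarrow> (nat \<Rightarrow> nat) \<Rightarrow> complex" where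
  "chi \<nu> n I g = (\<Prod>i\<in>{1..<n} - I. psi \<nu> (g i))"

definition comp :: "nat \<Rightarrow> nat set \<Rightarrow> nat list" where
  "comp n S = (if n = 0 then [] else
     (let s = sorted_list_of_set S in map2 (-) (s @ [n]) (0 # s)))"

definition is_comp :: "nat list \<Rightarrow> bool" where
  "is_comp \<alpha> = (\<forall>x\<in>set \<alpha>. 0 < x)"

(* QSym realised inside formal power series in x_0, x_1, ...:
   a series is its coefficient function on exponent vectors (monomials). *)
definition M :: "nat list \<Rightarrow> (nat \<Rightarrow> nat) \<Rightarrow> complex" where
  "M \<alpha> e = (if \<exists>j::nat \<Rightarrow> nat. (\<forall>k l. k < l \<and> l < length \<alpha> \<longrightarrow> j k < j l) \<and>
                  e = (\<lambda>i. \<Sum>k<length \<alpha>. if j k = i then \<alpha> ! k else 0)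
             then 1 else 0)"

(* L_{comp(I)} for I a subset of [n-1] *)
definition Lfun :: "nat \<Rightarrow> nat set \<Rightarrow> (nat \<Rightarrow> nat) \<Rightarrow> complex" where
  "Lfun n I = (\<lambda>e. \<Sum>J\<in>{J. I \<subseteq> J \<and> J \<subseteq> {1..<n}}. M (comp n J) e)"

definition qmult :: "((nat \<Rightarrow> nat) \<Rightarrow> complex) \<Rightarrow> ((nat \<Rightarrow> nat) \<Rightarrow> complex) \<Rightarrow> (nat \<Rightarrow> nat) \<Rightarrow> complex" where
  "qmult f g e = (\<Sum>e1\<in>{e1. \<forall>i. e1 i \<le> e i}. f e1 * g (\<lambda>i. e i - e1 i))"

(* QSym (x) QSym realised as series in two variable sets x, y *)
definition tens :: "((nat \<Rightarrow> nat) \<Rightarrow> complex) \<Rightarrow> ((nat \<Rightarrow> nat) \<Rightarrow> complex) \<Rightarrow> (nat \<Rightarrow> nat) \<times> (nat \<Rightarrow> nat) \<Rightarrow> complex" where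
  "tens f g = (\<lambda>(e1, e2). f e1 * g e2)"

definition coprodM :: "nat list \<Rightarrow> (nat \<Rightarrow> nat) \<times> (nat \<Rightarrow> nat) \<Rightarrow> complex" where
  "coprodM \<alpha> = (\<lambda>p. \<Sum>k\<le>length \<alpha>. tens (M (take k \<alpha>)) (M (drop k \<alpha>)) p)"

definition qcoprod :: "((nat \<Rightarrow> nat) \<Rightarrow> complex) \<Rightarrow> (nat \<Rightarrow> nat) \<times> (nat \<Rightarrow> nat) \<Rightarrow> complex" where
  "qcoprod f = (THE t. \<exists>A c. finite A \<and> (\<forall>\<alpha>\<in>A. is_comp \<alpha>) \<and>
      f = (\<lambda>e. \<Sum>\<alpha>\<in>A. c \<alpha> * M \<alpha> e) \<and> t = (\<lambda>p. \<Sum>\<alpha>\<in>A. c \<alpha> * coprodM \<alpha> p))"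

definition ch :: "nat \<Rightarrow> nat \<Rightarrow> ((nat \<Rightarrow> nat) \<Rightarrow> complex) \<Rightarrow> (nat \<Rightarrow> nat) \<Rightarrow> complex" where
  "ch \<nu> n f = (THE q. \<exists>c. (\<forall>g\<in>Qn \<nu> n. f g = (\<Sum>I\<in>Pow {1..<n}. c I * chi \<nu> n I g)) \<and>
      q = (\<lambda>e. \<Sum>I\<in>Pow {1..<n}. c I * Lfun n I e))"

(* ch_nu (x) ch_nu on scf(N_k) (x) scf(N_l), functions on Q_k x Q_l *)
definition ch2 :: "nat \<Rightarrow> nat \<Rightarrow> nat \<Rightarrow> ((nat \<Rightarrow> nat) \<Rightarrow> (nat \<Rightarrow> nat) \<Rightarrow> complex) \<Rightarrow> (nat \<Rightarrow> nat) \<times> (nat \<Rightarrow> nat) \<Rightarrow> complex" where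
  "ch2 \<nu> k l F = (THE t. \<exists>c. (\<forall>a\<in>Qn \<nu> k. \<forall>b\<in>Qn \<nu> l.
        F a b = (\<Sum>I\<in>Pow {1..<k}. \<Sum>J\<in>Pow {1..<l}. c I J * (chi \<nu> k I a * chi \<nu> l J b))) \<and>
      t = (\<lambda>p. \<Sum>I\<in>Pow {1..<k}. \<Sum>J\<in>Pow {1..<l}. c I J * tens (Lfun k I) (Lfun l J) p))"

definition consec :: "nat set \<Rightarrow> bool" where
  "consec B = (\<exists>a b. a \<le> b \<and> B = {a..b})"

definition conn :: "nat set \<Rightarrow> nat set set" where
  "conn A = {B. B \<subseteq> A \<and> consec B \<and> (\<forall>C. C \<subseteq> A \<and> consec C \<and> B \<subseteq> C \<longrightarrow> C = B)}"

definition c1 :: "nat \<Rightarrow> nat set \<Rightarrow> nat set" where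
  "c1 N A = (Max ` conn A) - {N}"

definition c2 :: "nat \<Rightarrow> nat set \<Rightarrow> nat set" where
  "c2 N A = (Max ` conn ({1..N} - A)) - {N}"

definition cc :: "nat \<Rightarrow> nat set \<Rightarrow> nat set" where
  "cc N A = c1 N A \<union> c2 N A"

definition sA :: "nat \<Rightarrow> nat \<Rightarrow> nat \<Rightarrow> nat set \<Rightarrow> ((nat \<Rightarrow> nat) \<Rightarrow> complex) \<Rightarrow> ((nat \<Rightarrow> nat) \<Rightarrow> complex) \<Rightarrow> (nat \<Rightarrow> nat) \<Rightarrow> complex" where
  "sA \<nu> m n A \<phi> \<psi>' h =
    (let b = sorted_list_of_set A; a = sorted_list_of_set ({1..m+n} - A) in
      \<phi> (\<lambda>k. if k \<in> {1..<m} then h (a ! (k - 1)) else 0) * psi \<nu> (h (a ! (m - 1))) *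
      \<psi>' (\<lambda>k. if k \<in> {1..<n} then h (b ! (k - 1)) else 0) * psi \<nu> (h (b ! (n - 1))))"

definition mA :: "nat \<Rightarrow> nat \<Rightarrow> nat \<Rightarrow> nat set \<Rightarrow> ((nat \<Rightarrow> nat) \<Rightarrow> complex) \<Rightarrow> ((nat \<Rightarrow> nat) \<Rightarrow> complex) \<Rightarrow> (nat \<Rightarrow> nat) \<Rightarrow> complex" where
  "mA \<nu> m n A \<phi> \<psi>' g =
    (if m = 0 \<or> n = 0 then \<phi> (if m = 0 then (\<lambda>_. 0) else g) * \<psi>' (if n = 0 then (\<lambda>_. 0) else g)
     else (\<Prod>i\<in>c2 (m + n) A. psi \<nu> (g i)) *
          sA \<nu> m n A \<phi> \<psi>' (\<lambda>i. if i \<in> {1..<m + n} - cc (m + n) A then g i else 0))"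

definition mprod :: "nat \<Rightarrow> nat \<Rightarrow> nat \<Rightarrow> ((nat \<Rightarrow> nat) \<Rightarrow> complex) \<Rightarrow> ((nat \<Rightarrow> nat) \<Rightarrow> complex) \<Rightarrow> (nat \<Rightarrow> nat) \<Rightarrow> complex" where
  "mprod \<nu> m n \<phi> \<psi>' g = (\<Sum>A\<in>{A. A \<subseteq> {1..m + n} \<and> card A = n}. mA \<nu> m n A \<phi> \<psi>' g)"

definition cop :: "nat \<Rightarrow> nat \<Rightarrow> ((nat \<Rightarrow> nat) \<Rightarrow> complex) \<Rightarrow> (nat \<Rightarrow> nat) \<Rightarrow> (nat \<Rightarrow> nat) \<Rightarrow> complex" where
  "cop n k \<phi> = (if k = 0 then (\<lambda>a b. \<phi> b) else if k = n then (\<lambda>a b. \<phi> a)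
     else (\<lambda>a b. \<phi> (\<lambda>i. if i < k then a i else if i = k then 0 else b (i - k))))"

end

theory Submission
  imports Defs
begin

definition rk :: "nat set \<Rightarrow> nat \<Rightarrow> nat" where
  "rk X s = card {t\<in>X. t \<le> s}"

definition en :: "nat set \<Rightarrow> nat \<Rightarrow> nat" where
  "en X k = sorted_list_of_set X ! (k - 1)"

lemma slos_strict:
  assumes "finite X" "i < j" "j < card X"
  shows "sorted_list_of_set X ! i < sorted_list_of_set X ! j"
  using assms sorted_wrt_nth_less[OF sorted_list_of_set.strict_sorted_key_list_of_set[of X]]
  by simp

lemma slos_le_iff:
  assumes "finite X" "i < card X" "j < card X"
  shows "sorted_list_of_set X ! i \<le> sorted_list_of_set X ! j \<longleftrightarrow> i \<le> j"
proof
  assume "sorted_list_of_set X ! i \<le> sorted_list_of_set X ! j"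
  then show "i \<le> j" using slos_strict[OF assms(1), of j i] assms by (meson leD leI)
next
  assume "i \<le> j"
  then show "sorted_list_of_set X ! i \<le> sorted_list_of_set X ! j"
    using slos_strict[OF assms(1), of i j] assms by (cases "i = j") auto
qed

lemma en_props:
  assumes "finite X" "1 \<le> k" "k \<le> card X"
  shows "en X k \<in> X" "rk X (en X k) = k"
proof -
  let ?S = "sorted_list_of_set X"
  have L: "length ?S = card X" by simp
  have sX: "set ?S = X" using assms(1) by simp
  show "en X k \<in> X" unfolding en_def using assms L sX
    using nth_mem[of "k-1" ?S] by simp
  have eq: "{t\<in>X. t \<le> ?S ! (k-1)} = (\<lambda>i. ?S ! i) ` {i. i \<le> k - 1}"
  proof
    show "{t\<in>X. t \<le> ?S ! (k-1)} \<subseteq> (\<lambda>i. ?S ! i) ` {i. i \<le> k - 1}"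
    proof
      fix t assume "t \<in> {t\<in>X. t \<le> ?S ! (k-1)}"
      then have t: "t \<in> set ?S" "t \<le> ?S ! (k-1)" using sX by auto
      then obtain i where i: "i < length ?S" "t = ?S ! i" by (metis in_set_conv_nth)
      then have "i \<le> k - 1" using slos_le_iff[OF assms(1), of i "k-1"] t assms L by auto
      then show "t \<in> (\<lambda>i. ?S ! i) ` {i. i \<le> k - 1}" using i by auto
    qed
  next
    show "(\<lambda>i. ?S ! i) ` {i. i \<le> k - 1} \<subseteq> {t\<in>X. t \<le> ?S ! (k-1)}"
    proof
      fix t assume "t \<in> (\<lambda>i. ?S ! i) ` {i. i \<le> k - 1}"
      then obtain i where i: "i \<le> k - 1" "t = ?S ! i" by auto
      then have "i < length ?S" using assms L by linarith
      then show "t \<in> {t\<in>X. t \<le> ?S ! (k-1)}"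
        using i slos_le_iff[OF assms(1), of i "k-1"] assms L sX nth_mem[of i ?S] by auto
    qed
  qed
  have inj: "inj_on (\<lambda>i. ?S ! i) {i. i \<le> k - 1}"
    using assms L by (intro inj_onI) (simp add: nth_eq_iff_index_eq)
  have "card {t\<in>X. t \<le> ?S ! (k-1)} = card {i. i \<le> k - 1}"
    using eq card_image[OF inj] by simp
  also have "\<dots> = k" using assms by simp
  finally show "rk X (en X k) = k" unfolding rk_def en_def .
qed

lemma rk_strict:
  assumes "finite X" "s \<in> X" "t \<in> X" "s < t"
  shows "rk X s < rk X t"
proof -
  have "t \<in> {u\<in>X. u \<le> t}" "t \<notin> {u\<in>X. u \<le> s}" using assms by auto
  then have ne: "{u\<in>X. u \<le> s} \<noteq> {u\<in>X. u \<le> t}" by blast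
  have "{u\<in>X. u \<le> s} \<subseteq> {u\<in>X. u \<le> t}" using assms by auto
  then have "{u\<in>X. u \<le> s} \<subset> {u\<in>X. u \<le> t}" using ne by blast
  then show ?thesis unfolding rk_def by (intro psubset_card_mono) (use assms in auto)
qed

lemma rk_mono:
  assumes "finite X" "s \<le> t"
  shows "rk X s \<le> rk X t"
  unfolding rk_def by (rule card_mono) (use assms in auto)

lemma rk_bounds:
  assumes "finite X" "s \<in> X"
  shows "1 \<le> rk X s" "rk X s \<le> card X"
proof -
  have "s \<in> {t\<in>X. t \<le> s}" using assms by auto
  then show "1 \<le> rk X s" unfolding rk_def using assms
    using card_gt_0_iff[of "{t\<in>X. t \<le> s}"] by force
  show "rk X s \<le> card X" unfolding rk_def by (rule card_mono) (use assms in auto)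
qed

lemma rk_le_card: "finite X \<Longrightarrow> rk X s \<le> card X"
  unfolding rk_def by (rule card_mono) auto

lemma en_rk:
  assumes "finite X" "s \<in> X"
  shows "en X (rk X s) = s"
proof -
  have b: "1 \<le> rk X s" "rk X s \<le> card X" using rk_bounds[OF assms] by auto
  have e: "en X (rk X s) \<in> X" "rk X (en X (rk X s)) = rk X s" using en_props[OF assms(1) b] by auto
  show ?thesis
  proof (rule ccontr)
    assume ne: "en X (rk X s) \<noteq> s"
    show False
    proof (cases "en X (rk X s) < s")
      case True
      then show False using rk_strict[OF assms(1) e(1) assms(2)] e(2) by simp
    next
      case False
      then have "s < en X (rk X s)" using ne by simp
      then show False using rk_strict[OF assms(1) assms(2) e(1)] e(2) by simp
    qed
  qed
qed

lemma en_strict: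
  assumes "finite X" "1 \<le> k" "k < l" "l \<le> card X"
  shows "en X k < en X l"
proof -
  have a: "en X k \<in> X" "rk X (en X k) = k" using en_props[OF assms(1), of k] assms by auto
  have b: "en X l \<in> X" "rk X (en X l) = l" using en_props[OF assms(1), of l] assms by auto
  show ?thesis
  proof (rule ccontr)
    assume "\<not> en X k < en X l"
    then have "en X l \<le> en X k" by simp
    then have "rk X (en X l) \<le> rk X (en X k)" using rk_mono[OF assms(1)] by blast
    then show False using a b assms by simp
  qed
qed

lemma rk_Suc:
  assumes "finite X"
  shows "rk X (Suc s) = rk X s + (if Suc s \<in> X then 1 else 0)"
proof -
  show ?thesis
  proof (cases "Suc s \<in> X")
    case True
    then have "{t\<in>X. t \<le> Suc s} = insert (Suc s) {t\<in>X. t \<le> s}" by auto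
    then show ?thesis unfolding rk_def using assms True by simp
  next
    case False
    then have "{t\<in>X. t \<le> Suc s} = {t\<in>X. t \<le> s}" using le_Suc_eq by auto
    then show ?thesis unfolding rk_def using False by simp
  qed
qed

lemma en_Suc_if_next:
  assumes "finite X" "s \<in> X" "Suc s \<in> X"
  shows "en X (Suc (rk X s)) = Suc s"
  using rk_Suc[OF assms(1), of s] assms en_rk[OF assms(1) assms(3)] by simp

lemma en_between:
  assumes "finite X" "1 \<le> k" "k < card X" "en X k < t" "t < en X (Suc k)"
  shows "t \<notin> X"
proof
  assume t: "t \<in> X"
  have a1: "en X k \<in> X" "rk X (en X k) = k" using en_props[OF assms(1), of k] assms by auto
  have a2: "en X (Suc k) \<in> X" "rk X (en X (Suc k)) = Suc k"
    using en_props[OF assms(1), of "Suc k"] assms by auto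
  have "rk X (en X k) < rk X t" by (rule rk_strict[OF assms(1) a1(1) t assms(4)])
  moreover have "rk X t < rk X (en X (Suc k))" by (rule rk_strict[OF assms(1) t a2(1) assms(5)])
  ultimately show False using a1(2) a2(2) by simp
qed

definition Cb :: "(nat \<Rightarrow> nat) \<Rightarrow> nat \<Rightarrow> nat" where
  "Cb e i = (\<Sum>j<i. e j)"

definition wi :: "nat \<Rightarrow> (nat \<Rightarrow> nat) \<Rightarrow> bool" where
  "wi m f \<longleftrightarrow> (\<forall>s t. 1 \<le> s \<longrightarrow> s \<le> t \<longrightarrow> t \<le> m \<longrightarrow> f s \<le> f t)"

definition cnt :: "nat \<Rightarrow> (nat \<Rightarrow> nat) \<Rightarrow> nat \<Rightarrow> nat" where
  "cnt m f = (\<lambda>i. card {s\<in>{1..m}. f s = i})"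

definition bnd :: "(nat \<Rightarrow> nat) \<Rightarrow> nat \<Rightarrow> bool" where
  "bnd e B \<longleftrightarrow> (\<forall>j\<ge>B. e j = 0)"

lemma Cb_0[simp]: "Cb e 0 = 0" by (simp add: Cb_def)
lemma Cb_Suc: "Cb e (Suc i) = Cb e i + e i" by (simp add: Cb_def)

lemma Cb_mono: "i \<le> j \<Longrightarrow> Cb e i \<le> Cb e j"
  unfolding Cb_def by (rule sum_mono2) auto

lemma Cb_bnd: "bnd e B \<Longrightarrow> B \<le> j \<Longrightarrow> Cb e j = Cb e B"
proof (induction j)
  case 0 then show ?case by simp
next
  case (Suc j)
  show ?case
  proof (cases "B \<le> j")
    case True
    then show ?thesis using Suc by (simp add: Cb_Suc bnd_def)
  next
    case False
    then have "B = Suc j" using Suc by simp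
    then show ?thesis by simp
  qed
qed

lemma Cb_le_bnd: "bnd e B \<Longrightarrow> Cb e j \<le> Cb e B"
  by (metis Cb_bnd Cb_mono nle_le)

lemma W1: "card {s\<in>{1..m}. f s < i} = Cb (cnt m f) i"
proof (induction i)
  case 0 then show ?case by simp
next
  case (Suc i)
  have "{s\<in>{1..m}. f s < Suc i} = {s\<in>{1..m}. f s < i} \<union> {s\<in>{1..m}. f s = i}" by auto
  then have "card {s\<in>{1..m}. f s < Suc i} = card {s\<in>{1..m}. f s < i} + card {s\<in>{1..m}. f s = i}"
    by (simp add: card_Un_disjoint disjoint_iff)
  then show ?case using Suc by (simp add: Cb_Suc cnt_def)
qed

lemma W2:
  assumes "D \<subseteq> {1..m}" "\<And>s t. s \<in> D \<Longrightarrow> 1 \<le> t \<Longrightarrow> t \<le> s \<Longrightarrow> t \<in> D"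
  shows "D = {1..card D}"
proof (cases "D = {}")
  case True then show ?thesis by simp
next
  case False
  have fin: "finite D" using assms(1) finite_subset by blast
  let ?M = "Max D"
  have MD: "?M \<in> D" using Max_in[OF fin False] .
  have eq: "D = {1..?M}"
  proof
    show "D \<subseteq> {1..?M}" using assms(1) Max_ge[OF fin] by auto
    show "{1..?M} \<subseteq> D" using assms(2)[OF MD] by auto
  qed
  have "card {1..?M} = ?M" by simp
  moreover have "card D = card {1..?M}" using eq by (rule arg_cong)
  ultimately have "card D = ?M" by simp
  then show ?thesis using eq by simp
qed

lemma W3:
  assumes "wi m f"
  shows "{s\<in>{1..m}. f s < i} = {1..Cb (cnt m f) i}"
proof -
  have "{s\<in>{1..m}. f s < i} = {1..card {s\<in>{1..m}. f s < i}}"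
  proof (rule W2)
    show "{s \<in> {1..m}. f s < i} \<subseteq> {1..m}" by auto
    fix s t assume "s \<in> {s \<in> {1..m}. f s < i}" "1 \<le> t" "t \<le> s"
    then show "t \<in> {s \<in> {1..m}. f s < i}" using assms unfolding wi_def
      by (auto intro: le_less_trans)
  qed
  then show ?thesis using W1 by simp
qed

lemma W4:
  assumes "wi m f" "1 \<le> s" "s \<le> m"
  shows "f s = i \<longleftrightarrow> Cb (cnt m f) i < s \<and> s \<le> Cb (cnt m f) (Suc i)"
proof -
  have "s \<in> {s\<in>{1..m}. f s < i} \<longleftrightarrow> s \<in> {1..Cb (cnt m f) i}" using W3[OF assms(1), of i] by simp
  then have a: "f s < i \<longleftrightarrow> s \<le> Cb (cnt m f) i" using assms by simp
  have "s \<in> {s\<in>{1..m}. f s < Suc i} \<longleftrightarrow> s \<in> {1..Cb (cnt m f) (Suc i)}" using W3[OF assms(1), of "Suc i"] by simp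
  then have b: "f s < Suc i \<longleftrightarrow> s \<le> Cb (cnt m f) (Suc i)" using assms by simp
  show ?thesis using a b by auto
qed

lemma W5:
  assumes "wi m f" "wi m g" "cnt m f = cnt m g" "1 \<le> s" "s \<le> m"
  shows "f s = g s"
  using W4[OF assms(1) assms(4,5), of "f s"] W4[OF assms(2) assms(4,5), of "f s"] assms(3) by simp

lemma W6:
  assumes "wi m f" "1 \<le> k" "k < m"
  shows "f k < f (Suc k) \<longleftrightarrow> k \<in> range (Cb (cnt m f))"
proof
  assume lt: "f k < f (Suc k)"
  let ?c = "Cb (cnt m f) (f (Suc k))"
  have eq: "{s\<in>{1..m}. f s < f (Suc k)} = {1..?c}" using W3[OF assms(1)] .
  have "k \<in> {s\<in>{1..m}. f s < f (Suc k)}" using lt assms by simp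
  then have "k \<in> {1..?c}" unfolding eq .
  then have "k \<le> ?c" by simp
  moreover have "Suc k \<notin> {s\<in>{1..m}. f s < f (Suc k)}" by simp
  then have "Suc k \<notin> {1..?c}" unfolding eq .
  then have "\<not> Suc k \<le> ?c" by simp
  ultimately have "?c = k" by simp
  then show "k \<in> range (Cb (cnt m f))" by (metis rangeI)
next
  assume "k \<in> range (Cb (cnt m f))"
  then obtain i where i: "Cb (cnt m f) i = k" by auto
  have eq: "{s\<in>{1..m}. f s < i} = {1..k}" using W3[OF assms(1), of i] i by simp
  have "k \<in> {1..k}" using assms by simp
  then have "k \<in> {s\<in>{1..m}. f s < i}" unfolding eq .
  then have "f k < i" by simp
  moreover have "Suc k \<notin> {1..k}" by simp
  then have "Suc k \<notin> {s\<in>{1..m}. f s < i}" unfolding eq .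
  then have "\<not> f (Suc k) < i" using assms by simp
  ultimately show "f k < f (Suc k)" by simp
qed

lemma W7:
  assumes "\<And>s. 1 \<le> s \<Longrightarrow> s \<le> m \<Longrightarrow> f s < B"
  shows "bnd (cnt m f) B" "Cb (cnt m f) B = m"
proof -
  show "bnd (cnt m f) B" unfolding bnd_def cnt_def
  proof (intro allI impI)
    fix j assume "B \<le> j"
    then have "{s \<in> {1..m}. f s = j} = {}" using assms by fastforce
    then show "card {s \<in> {1..m}. f s = j} = 0" by simp
  qed
  have "{s\<in>{1..m}. f s < B} = {1..m}" using assms by auto
  then show "Cb (cnt m f) B = m" using W1[of m f B] by simp
qed

lemma W7':
  obtains B where "bnd (cnt m f) B" "Cb (cnt m f) B = m"
proof -
  have "\<And>s. 1 \<le> s \<Longrightarrow> s \<le> m \<Longrightarrow> f s < Suc (sum f {1..m})"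
    by (simp add: le_imp_less_Suc member_le_sum)
  then show ?thesis using W7 that by blast
qed

lemma W8:
  assumes "bnd e B" "Cb e B = m"
  shows "\<exists>f. wi m f \<and> cnt m f = e"
proof -
  define f where "f s = (LEAST i. s \<le> Cb e (Suc i))" for s
  have ex: "s \<le> Cb e (Suc B)" if "s \<le> m" for s
    using Cb_bnd[OF assms(1), of "Suc B"] assms that by simp
  have fle: "s \<le> Cb e (Suc (f s))" if "s \<le> m" for s
    unfolding f_def using ex[OF that] by (rule LeastI)
  have fmin: "f s \<le> i" if "s \<le> Cb e (Suc i)" for s i
    unfolding f_def using that by (rule Least_le)
  have Cbm: "Cb e j \<le> m" for j using Cb_le_bnd[OF assms(1)] assms(2) by simp
  have char: "f s = i \<longleftrightarrow> Cb e i < s \<and> s \<le> Cb e (Suc i)" if "1 \<le> s" "s \<le> m" for s i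
  proof
    assume fi: "f s = i"
    have "s \<le> Cb e (Suc i)" using fle[OF that(2)] fi by simp
    moreover have "Cb e i < s"
    proof (cases i)
      case 0 then show ?thesis using that by simp
    next
      case (Suc i')
      have "\<not> s \<le> Cb e (Suc i')"
      proof
        assume "s \<le> Cb e (Suc i')"
        then have "f s \<le> i'" by (rule fmin)
        then show False using fi Suc by simp
      qed
      then show ?thesis using Suc by simp
    qed
    ultimately show "Cb e i < s \<and> s \<le> Cb e (Suc i)" by simp
  next
    assume h: "Cb e i < s \<and> s \<le> Cb e (Suc i)"
    then have "f s \<le> i" using fmin by blast
    moreover have "\<not> f s < i"
    proof
      assume "f s < i"
      then have "Cb e (Suc (f s)) \<le> Cb e i" by (intro Cb_mono) simp
      then show False using fle[OF that(2)] h by simp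
    qed
    ultimately show "f s = i" by simp
  qed
  have "wi m f" unfolding wi_def
  proof (intro allI impI)
    fix s t assume st: "1 \<le> s" "s \<le> t" "t \<le> m"
    have "t \<le> Cb e (Suc (f t))" using fle st by simp
    then have "s \<le> Cb e (Suc (f t))" using st by simp
    then show "f s \<le> f t" by (rule fmin)
  qed
  moreover have "cnt m f = e"
  proof
    fix i
    have "{s\<in>{1..m}. f s = i} = {Cb e i<..Cb e (Suc i)}"
    proof (rule set_eqI)
      fix s
      show "s \<in> {s\<in>{1..m}. f s = i} \<longleftrightarrow> s \<in> {Cb e i<..Cb e (Suc i)}"
      proof
        assume "s \<in> {s\<in>{1..m}. f s = i}"
        then show "s \<in> {Cb e i<..Cb e (Suc i)}" using char[of s i] by simp
      next
        assume a: "s \<in> {Cb e i<..Cb e (Suc i)}"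
        then have "1 \<le> s" "s \<le> m" using Cbm[of "Suc i"] by auto
        then show "s \<in> {s\<in>{1..m}. f s = i}" using char[of s i] a by simp
      qed
    qed
    then show "cnt m f i = e i" unfolding cnt_def by (simp add: Cb_Suc)
  qed
  ultimately show ?thesis by blast
qed

definition LCb :: "nat \<Rightarrow> nat set \<Rightarrow> (nat \<Rightarrow> nat) \<Rightarrow> bool" where
  "LCb m I e \<longleftrightarrow> (\<exists>B. bnd e B \<and> Cb e B = m) \<and> I \<subseteq> range (Cb e)"

definition LF :: "nat \<Rightarrow> nat set \<Rightarrow> (nat \<Rightarrow> nat) \<Rightarrow> bool" where
  "LF m I e \<longleftrightarrow> (\<exists>f. wi m f \<and> cnt m f = e \<and> (\<forall>k\<in>I. f k < f (Suc k)))"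

lemma W9:
  assumes "I \<subseteq> {1..<m}"
  shows "LCb m I e \<longleftrightarrow> LF m I e"
proof
  assume "LCb m I e"
  then obtain B where B: "bnd e B" "Cb e B = m" and I: "I \<subseteq> range (Cb e)" unfolding LCb_def by blast
  obtain f where f: "wi m f" "cnt m f = e" using W8[OF B] by blast
  have "\<forall>k\<in>I. f k < f (Suc k)"
  proof
    fix k assume k: "k \<in> I"
    then have "1 \<le> k" "k < m" using assms by auto
    then show "f k < f (Suc k)" using W6[OF f(1), of k] I k f(2) by auto
  qed
  then show "LF m I e" unfolding LF_def using f by blast
next
  assume "LF m I e"
  then obtain f where f: "wi m f" "cnt m f = e" "\<forall>k\<in>I. f k < f (Suc k)" unfolding LF_def by blast
  obtain B where "bnd (cnt m f) B" "Cb (cnt m f) B = m" using W7' by blast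
  moreover have "I \<subseteq> range (Cb e)"
  proof
    fix k assume k: "k \<in> I"
    then have "1 \<le> k" "k < m" using assms by auto
    then show "k \<in> range (Cb e)" using W6[OF f(1), of k] k f by auto
  qed
  ultimately show "LCb m I e" unfolding LCb_def using f(2) by blast
qed

definition supp :: "(nat \<Rightarrow> nat) \<Rightarrow> nat set" where
  "supp e = {i. e i \<noteq> 0}"

definition nz :: "(nat \<Rightarrow> nat) \<Rightarrow> nat list" where
  "nz e = map e (sorted_list_of_set (supp e))"

definition psall :: "nat list \<Rightarrow> nat set" where
  "psall \<beta> = {sum_list (take c \<beta>) | c. c \<le> length \<beta>}"

lemma fin_bnd: "finite (supp e) \<longleftrightarrow> (\<exists>B. bnd e B)"
proof
  assume "finite (supp e)"
  then obtain k where "\<forall>i\<in>supp e. i < k" using finite_nat_set_iff_bounded by blast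
  then have "bnd e k" unfolding bnd_def supp_def by force
  then show "\<exists>B. bnd e B" by blast
next
  assume "\<exists>B. bnd e B"
  then obtain B where "bnd e B" by blast
  then have "supp e \<subseteq> {..<B}" unfolding bnd_def supp_def
    using not_less by blast
  then show "finite (supp e)" using finite_subset by blast
qed

lemma M_cases: "M \<alpha> e = 0 \<or> M \<alpha> e = 1"
  unfolding M_def by simp

lemma M_one_imp:
  assumes "is_comp \<beta>" "M \<beta> e = 1"
  shows "finite (supp e) \<and> \<beta> = nz e"
proof -
  let ?L = "length \<beta>"
  obtain j where j: "\<forall>k l. k < l \<and> l < ?L \<longrightarrow> j k < j l"
    and e: "e = (\<lambda>i. \<Sum>k<?L. if j k = i then \<beta> ! k else 0)"
  proof -
    have "M \<beta> e \<noteq> 0" using assms(2) by simp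
    then have "\<exists>j::nat \<Rightarrow> nat. (\<forall>k l. k < l \<and> l < ?L \<longrightarrow> j k < j l) \<and>
                  e = (\<lambda>i. \<Sum>k<?L. if j k = i then \<beta> ! k else 0)"
      unfolding M_def by meson
    then show ?thesis using that by blast
  qed
  have jinj: "inj_on j {..<?L}"
  proof (rule inj_onI)
    fix x y assume "x \<in> {..<?L}" "y \<in> {..<?L}" "j x = j y"
    then show "x = y"
    proof (cases x y rule: linorder_cases)
      case less then show ?thesis using j \<open>y \<in> {..<?L}\<close> \<open>j x = j y\<close> by force
    next
      case greater then show ?thesis using j \<open>x \<in> {..<?L}\<close> \<open>j x = j y\<close> by force
    qed
  qed
  have ejk: "e (j k) = \<beta> ! k" if "k < ?L" for k
  proof -
    have "e (j k) = (\<Sum>k'<?L. if j k' = j k then \<beta> ! k' else 0)" by (subst e) simp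
    also have "\<dots> = (\<Sum>k'<?L. if k' = k then \<beta> ! k' else 0)"
    proof (rule sum.cong[OF refl])
      fix k' assume "k' \<in> {..<?L}"
      then have "j k' = j k \<longleftrightarrow> k' = k" using inj_on_eq_iff[OF jinj, of k' k] that by simp
      then show "(if j k' = j k then \<beta> ! k' else 0) = (if k' = k then \<beta> ! k' else 0)" by simp
    qed
    also have "\<dots> = \<beta> ! k" using that by (simp add: sum.delta)
    finally show ?thesis .
  qed
  have e0: "e i = 0" if "i \<notin> j ` {..<?L}" for i
  proof -
    have "e i = (\<Sum>k<?L. if j k = i then \<beta> ! k else 0)" by (subst e) simp
    also have "\<dots> = 0" using that by (intro sum.neutral) auto
    finally show ?thesis .
  qed
  have pos: "\<beta> ! k > 0" if "k < ?L" for k using assms(1) that unfolding is_comp_def by simp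
  have supp: "supp e = j ` {..<?L}"
  proof
    show "supp e \<subseteq> j ` {..<?L}"
    proof
      fix i assume "i \<in> supp e"
      then have "e i \<noteq> 0" unfolding supp_def by simp
      then show "i \<in> j ` {..<?L}" using e0 by metis
    qed
    show "j ` {..<?L} \<subseteq> supp e"
    proof
      fix x assume "x \<in> j ` {..<?L}"
      then obtain k where k: "k < ?L" "x = j k" by auto
      then have "e x > 0" using ejk pos by simp
      then show "x \<in> supp e" unfolding supp_def by simp
    qed
  qed
  have sl: "sorted_list_of_set (supp e) = map j [0..<?L]"
  proof -
    have A: "sorted_wrt (<) (map j [0..<?L])"
      unfolding sorted_wrt_iff_nth_less using j by simp
    have B: "set (map j [0..<?L]) = supp e" using supp by (simp add: atLeast0LessThan)
    have C: "length (map j [0..<?L]) = card (supp e)"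
      using supp card_image[OF jinj] by simp
    have fin: "finite (supp e)" using supp by simp
    show ?thesis using sorted_list_of_set_unique[OF fin, of "map j [0..<?L]"] A B C by blast
  qed
  have "nz e = map (\<lambda>k. \<beta> ! k) [0..<?L]" unfolding nz_def sl using ejk by simp
  also have "\<dots> = \<beta>" by (rule map_nth)
  finally show ?thesis using supp by simp
qed

lemma M_one_if:
  assumes "finite (supp e)"
  shows "M (nz e) e = 1"
proof -
  let ?S = "sorted_list_of_set (supp e)"
  let ?L = "length (nz e)"
  have L: "?L = card (supp e)" unfolding nz_def by simp
  define j where "j k = ?S ! k" for k
  have jm: "\<forall>k l. k < l \<and> l < ?L \<longrightarrow> j k < j l"
    unfolding j_def using slos_strict[OF assms] L by simp
  have ee: "e = (\<lambda>i. \<Sum>k<?L. if j k = i then nz e ! k else 0)"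
  proof
    fix i
    show "e i = (\<Sum>k<?L. if j k = i then nz e ! k else 0)"
    proof (cases "i \<in> supp e")
      case True
      then have "i \<in> set ?S" using assms by simp
      then obtain k0 where k0: "k0 < length ?S" "?S ! k0 = i" by (metis in_set_conv_nth)
      have "(\<Sum>k<?L. if j k = i then nz e ! k else 0) = (\<Sum>k<?L. if k = k0 then nz e ! k else 0)"
      proof (rule sum.cong[OF refl])
        fix k assume "k \<in> {..<?L}"
        then have "k < length ?S" unfolding nz_def by simp
        then have "j k = i \<longleftrightarrow> k = k0" unfolding j_def using k0 nth_eq_iff_index_eq[of ?S k k0]
          by simp
        then show "(if j k = i then nz e ! k else 0) = (if k = k0 then nz e ! k else 0)" by simp
      qed
      also have "\<dots> = nz e ! k0" using k0 unfolding nz_def by (simp add: sum.delta)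
      also have "\<dots> = e i" using k0 unfolding nz_def by simp
      finally show ?thesis by simp
    next
      case False
      then have ei: "e i = 0" unfolding supp_def by simp
      have "(\<Sum>k<?L. if j k = i then nz e ! k else 0) = 0"
      proof (rule sum.neutral, rule ballI)
        fix k assume "k \<in> {..<?L}"
        then have "k < length ?S" unfolding nz_def by simp
        then have "j k \<in> supp e" unfolding j_def using nth_mem[of k ?S] assms by simp
        then show "(if j k = i then nz e ! k else 0) = 0" using False by auto
      qed
      then show ?thesis using ei by simp
    qed
  qed
  show ?thesis unfolding M_def using jm ee by auto
qed

lemma M_eq:
  assumes "is_comp \<beta>"
  shows "M \<beta> e = (if finite (supp e) \<and> \<beta> = nz e then 1 else 0)"
proof (cases "finite (supp e) \<and> \<beta> = nz e")
  case True
  then show ?thesis using M_one_if[of e] by simp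
next
  case False
  then have "M \<beta> e \<noteq> 1" using M_one_imp[OF assms, of e] by blast
  then have "M \<beta> e = 0" using M_cases[of \<beta> e] by blast
  then show ?thesis using False by simp
qed

lemma is_comp_nz: "is_comp (nz e)"
  unfolding is_comp_def
proof
  fix x assume "x \<in> set (nz e)"
  then obtain i where "i \<in> set (sorted_list_of_set (supp e))" "x = e i" unfolding nz_def by auto
  moreover have "finite (supp e)" using calculation(1) by (metis empty_iff list.set(1) sorted_list_of_set.fold_insort_key.infinite)
  ultimately show "0 < x" unfolding supp_def by simp
qed

lemma sum_list_take_nth: "c \<le> length xs \<Longrightarrow> sum_list (take c xs) = (\<Sum>k<c. xs ! k)"
proof -
  assume c: "c \<le> length xs"
  have "sum_list (take c xs) = (\<Sum>k = 0..<length (take c xs). take c xs ! k)" by (rule sum_list_sum_nth)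
  also have "\<dots> = (\<Sum>k<c. take c xs ! k)" using c by (simp add: atLeast0LessThan min_absorb2)
  also have "\<dots> = (\<Sum>k<c. xs ! k)" by (rule sum.cong) auto
  finally show ?thesis .
qed

lemma down0:
  assumes "D \<subseteq> {..<L}" "\<And>s t. s \<in> D \<Longrightarrow> t \<le> s \<Longrightarrow> t \<in> D"
  shows "D = {..<card D}"
proof (cases "D = {}")
  case True then show ?thesis by simp
next
  case False
  have fin: "finite D" using assms(1) finite_subset by blast
  let ?M = "Max D"
  have MD: "?M \<in> D" using Max_in[OF fin False] .
  have eq: "D = {..<Suc ?M}"
  proof
    show "D \<subseteq> {..<Suc ?M}" using Max_ge[OF fin] by (simp add: less_Suc_eq_le subset_iff)
    show "{..<Suc ?M} \<subseteq> D" using assms(2)[OF MD] by auto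
  qed
  have "card {..<Suc ?M} = Suc ?M" by simp
  moreover have "card D = card {..<Suc ?M}" using eq by (rule arg_cong)
  ultimately have "card D = Suc ?M" by simp
  then show ?thesis using eq by simp
qed

lemma Cb_nz:
  assumes "finite (supp e)"
  shows "\<exists>c. c \<le> length (nz e) \<and> Cb e i = sum_list (take c (nz e))
     \<and> card {k. k < length (nz e) \<and> sorted_list_of_set (supp e) ! k < i} = c"
proof -
  let ?S = "sorted_list_of_set (supp e)"
  let ?L = "length ?S"
  have L: "?L = card (supp e)" by simp
  have Ln: "length (nz e) = ?L" by (simp add: nz_def)
  let ?D = "{k. k < ?L \<and> ?S ! k < i}"
  have D: "?D = {..<card ?D}"
  proof (rule down0[of _ ?L])
    show "?D \<subseteq> {..<?L}" by auto
    fix s t assume s: "s \<in> ?D" and ts: "t \<le> s"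
    then have "?S ! t \<le> ?S ! s" using slos_le_iff[OF assms, of t s] L by auto
    then show "t \<in> ?D" using s ts by auto
  qed
  let ?c = "card ?D"
  have "?D \<subseteq> {..<?L}" by auto
  then have "?c \<le> card {..<?L}" by (intro card_mono) auto
  then have cL: "?c \<le> ?L" by simp
  have "Cb e i = (\<Sum>j\<in>{..<i}. e j)" unfolding Cb_def by simp
  also have "\<dots> = (\<Sum>j\<in>supp e \<inter> {..<i}. e j)"
    by (rule sum.mono_neutral_right) (auto simp: supp_def)
  also have "supp e \<inter> {..<i} = (\<lambda>k. ?S ! k) ` ?D"
  proof
    show "supp e \<inter> {..<i} \<subseteq> (\<lambda>k. ?S ! k) ` ?D"
    proof
      fix x assume x: "x \<in> supp e \<inter> {..<i}"
      then have "x \<in> set ?S" using assms by simp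
      then obtain k where k: "k < ?L" "?S ! k = x" by (metis in_set_conv_nth)
      then have "k \<in> ?D" using x by simp
      then show "x \<in> (\<lambda>k. ?S ! k) ` ?D" using k by (metis image_eqI)
    qed
    show "(\<lambda>k. ?S ! k) ` ?D \<subseteq> supp e \<inter> {..<i}"
    proof
      fix x assume "x \<in> (\<lambda>k. ?S ! k) ` ?D"
      then obtain k where k: "k < ?L" "?S ! k < i" "x = ?S ! k" by auto
      then have "x \<in> set ?S" by simp
      then show "x \<in> supp e \<inter> {..<i}" using k assms by simp
    qed
  qed
  also have "(\<Sum>j\<in>(\<lambda>k. ?S ! k) ` ?D. e j) = (\<Sum>k\<in>?D. e (?S ! k))"
  proof (rule sum.reindex_cong[OF _ refl refl])
    show "inj_on (\<lambda>k. ?S ! k) ?D"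
      by (rule inj_onI) (simp add: nth_eq_iff_index_eq)
  qed
  also have "\<dots> = (\<Sum>k<?c. e (?S ! k))" using D by simp
  also have "\<dots> = (\<Sum>k<?c. nz e ! k)"
  proof (rule sum.cong[OF refl])
    fix k assume "k \<in> {..<?c}"
    then have "k < ?L" using cL by simp
    then show "e (?S ! k) = nz e ! k" by (simp add: nz_def)
  qed
  also have "\<dots> = sum_list (take ?c (nz e))"
    using sum_list_take_nth[of ?c "nz e"] cL Ln by simp
  finally have "Cb e i = sum_list (take ?c (nz e))" .
  then show ?thesis using cL Ln by (intro exI[of _ ?c]) simp
qed

lemma range_Cb:
  assumes "finite (supp e)"
  shows "range (Cb e) = psall (nz e)"
proof
  show "range (Cb e) \<subseteq> psall (nz e)"
  proof
    fix x assume "x \<in> range (Cb e)"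
    then obtain i where "x = Cb e i" by auto
    then obtain c where "c \<le> length (nz e)" "x = sum_list (take c (nz e))"
      using Cb_nz[OF assms, of i] by blast
    then show "x \<in> psall (nz e)" unfolding psall_def by blast
  qed
  show "psall (nz e) \<subseteq> range (Cb e)"
  proof
    fix x assume "x \<in> psall (nz e)"
    then obtain c where c: "c \<le> length (nz e)" "x = sum_list (take c (nz e))"
      unfolding psall_def by blast
    let ?S = "sorted_list_of_set (supp e)"
    have L: "length ?S = card (supp e)" "length (nz e) = length ?S" by (simp_all add: nz_def)
    show "x \<in> range (Cb e)"
    proof (cases c)
      case 0
      then have "x = Cb e 0" using c by simp
      then show ?thesis by (rule range_eqI)
    next
      case (Suc c')
      let ?i = "Suc (?S ! c')"
      obtain c2 where c2: "c2 \<le> length (nz e)" "Cb e ?i = sum_list (take c2 (nz e))"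
        "card {k. k < length (nz e) \<and> ?S ! k < ?i} = c2"
        using Cb_nz[OF assms, of ?i] by blast
      have "{k. k < length (nz e) \<and> ?S ! k < ?i} = {..<c}"
      proof (rule set_eqI)
        fix k
        have c'L: "c' < length ?S" using c Suc L by simp
        show "k \<in> {k. k < length (nz e) \<and> ?S ! k < ?i} \<longleftrightarrow> k \<in> {..<c}"
        proof
          assume "k \<in> {k. k < length (nz e) \<and> ?S ! k < ?i}"
          then have "k < length ?S" "?S ! k \<le> ?S ! c'" using L by auto
          then have "k \<le> c'" using slos_le_iff[OF assms, of k c'] c'L L by simp
          then show "k \<in> {..<c}" using Suc by simp
        next
          assume "k \<in> {..<c}"
          then have "k \<le> c'" "k < length ?S" using Suc c'L by auto
          then have "?S ! k \<le> ?S ! c'" using slos_le_iff[OF assms, of k c'] c'L L by simp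
          then show "k \<in> {k. k < length (nz e) \<and> ?S ! k < ?i}" using \<open>k < length ?S\<close> L by simp
        qed
      qed
      then have "c2 = c" using c2(3) by simp
      then have "x = Cb e ?i" using c2 c by simp
      then show ?thesis by (rule range_eqI)
    qed
  qed
qed

lemma Cb_bnd_nz:
  assumes "finite (supp e)" "bnd e B"
  shows "Cb e B = sum_list (nz e)"
proof -
  let ?S = "sorted_list_of_set (supp e)"
  obtain c where c: "c \<le> length (nz e)" "Cb e B = sum_list (take c (nz e))"
    "card {k. k < length (nz e) \<and> ?S ! k < B} = c" using Cb_nz[OF assms(1), of B] by blast
  have "{k. k < length (nz e) \<and> ?S ! k < B} = {..<length (nz e)}"
  proof (rule set_eqI)
    fix k
    show "k \<in> {k. k < length (nz e) \<and> ?S ! k < B} \<longleftrightarrow> k \<in> {..<length (nz e)}"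
    proof
      assume "k \<in> {..<length (nz e)}"
      then have k: "k < length ?S" by (simp add: nz_def)
      then have "?S ! k \<in> set ?S" by (rule nth_mem)
      then have "?S ! k \<in> supp e" using assms(1) by simp
      then have "\<not> B \<le> ?S ! k" using assms(2) unfolding bnd_def supp_def by auto
      then show "k \<in> {k. k < length (nz e) \<and> ?S ! k < B}" using k by (simp add: nz_def)
    qed simp
  qed
  then have "c = length (nz e)" using c(3) by simp
  then show ?thesis using c(2) by simp
qed

lemma sum_take_Suc: "k < length \<beta> \<Longrightarrow> sum_list (take (Suc k) \<beta>) = sum_list (take k \<beta>) + \<beta> ! k"
  by (simp add: take_Suc_conv_app_nth)

lemma pstrict:
  assumes "is_comp \<beta>" "c < c'" "c' \<le> length \<beta>"
  shows "sum_list (take c \<beta>) < sum_list (take c' \<beta>)"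
  using assms(2,3)
proof (induction c')
  case 0 then show ?case by simp
next
  case (Suc c')
  have k: "c' < length \<beta>" using Suc.prems by simp
  have pos: "\<beta> ! c' > 0" using assms(1) k unfolding is_comp_def by simp
  have eq: "sum_list (take (Suc c') \<beta>) = sum_list (take c' \<beta>) + \<beta> ! c'" by (rule sum_take_Suc[OF k])
  show ?case
  proof (cases "c = c'")
    case True then show ?thesis using eq pos by simp
  next
    case False
    then have "c < c'" using Suc.prems by simp
    then have "sum_list (take c \<beta>) < sum_list (take c' \<beta>)" using Suc.IH k by simp
    then show ?thesis using eq by simp
  qed
qed

lemma map2_nth: "k < length xs \<Longrightarrow> k < length ys \<Longrightarrow> map2 f xs ys ! k = f (xs ! k) (ys ! k)"
  by simp

lemma C1:
  assumes J: "J \<subseteq> {1..<m}" and m: "0 < m"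
  shows "is_comp (comp m J) \<and> sum_list (comp m J) = m \<and> psall (comp m J) = insert 0 (insert m J)"
proof -
  let ?s = "sorted_list_of_set J"
  let ?P = "0 # ?s @ [m]"
  have finJ: "finite J" using J finite_subset by blast
  have setS: "set ?s = J" using finJ by simp
  have ss: "sorted_wrt (<) ?s" by simp
  have sP: "sorted_wrt (<) ?P"
    using ss setS J m by (auto simp: sorted_wrt_append)
  have cdef: "comp m J = map2 (-) (?s @ [m]) (0 # ?s)" using m by (simp add: comp_def Let_def)
  have len: "length (comp m J) = length ?s + 1" using cdef by simp
  have nthc: "comp m J ! k = ?P ! (Suc k) - ?P ! k" if "k < length ?s + 1" for k
  proof -
    have "comp m J ! k = (?s @ [m]) ! k - (0 # ?s) ! k" using cdef that map2_nth[of k "?s @ [m]" "0 # ?s" "(-)"] by simp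
    moreover have "(0 # ?s) ! k = ?P ! k" using that by (simp add: nth_Cons nth_append split: nat.split)
    ultimately show ?thesis by simp
  qed
  have Pless: "?P ! k < ?P ! (Suc k)" if "k < length ?s + 1" for k
    using sorted_wrt_nth_less[OF sP, of k "Suc k"] that by simp
  have take_eq: "sum_list (take c (comp m J)) = ?P ! c" if "c \<le> length ?s + 1" for c
    using that
  proof (induction c)
    case 0 then show ?case by simp
  next
    case (Suc c)
    have "sum_list (take (Suc c) (comp m J)) = sum_list (take c (comp m J)) + comp m J ! c"
      using sum_take_Suc[of c "comp m J"] Suc.prems len by simp
    also have "\<dots> = ?P ! c + (?P ! (Suc c) - ?P ! c)" using Suc nthc[of c] by simp
    also have "\<dots> = ?P ! (Suc c)" using Pless[of c] Suc.prems by simp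
    finally show ?case .
  qed
  have ic: "is_comp (comp m J)" unfolding is_comp_def
  proof
    fix x assume "x \<in> set (comp m J)"
    then obtain k where k: "k < length (comp m J)" "x = comp m J ! k" by (metis in_set_conv_nth)
    then show "0 < x" using nthc[of k] Pless[of k] len by simp
  qed
  have sm: "sum_list (comp m J) = m"
    using take_eq[of "length ?s + 1"] len by (simp add: nth_append)
  have ps: "psall (comp m J) = set ?P"
  proof
    show "psall (comp m J) \<subseteq> set ?P"
    proof
      fix x assume "x \<in> psall (comp m J)"
      then obtain c where "c \<le> length (comp m J)" "x = sum_list (take c (comp m J))"
        unfolding psall_def by blast
      then have "x = ?P ! c" "c < length ?P" using take_eq len by auto
      then show "x \<in> set ?P" by (metis nth_mem)
    qed
    show "set ?P \<subseteq> psall (comp m J)"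
    proof
      fix x assume "x \<in> set ?P"
      then obtain c where c: "c < length ?P" "x = ?P ! c" by (metis in_set_conv_nth)
      then have "c \<le> length (comp m J)" "x = sum_list (take c (comp m J))" using take_eq len by auto
      then show "x \<in> psall (comp m J)" unfolding psall_def by blast
    qed
  qed
  have "set ?P = insert 0 (insert m J)" using setS by auto
  then show ?thesis using ic sm ps by simp
qed

lemma C2:
  assumes b: "is_comp \<beta>" and sm: "sum_list \<beta> = m" and m: "0 < m"
  shows "\<exists>J. J \<subseteq> {1..<m} \<and> comp m J = \<beta>"
proof -
  let ?L = "length \<beta>"
  define Q where "Q c = sum_list (take c \<beta>)" for c
  have L1: "1 \<le> ?L" using sm m by (cases \<beta>) auto
  have Qs: "Q c < Q c'" if "c < c'" "c' \<le> ?L" for c c' unfolding Q_def using pstrict[OF b that] .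
  have Q0: "Q 0 = 0" unfolding Q_def by simp
  have QL: "Q ?L = m" unfolding Q_def using sm by simp
  define J where "J = Q ` {1..<?L}"
  have Jsub: "J \<subseteq> {1..<m}"
  proof
    fix x assume "x \<in> J"
    then obtain c where c: "1 \<le> c" "c < ?L" "x = Q c" unfolding J_def by auto
    have "Q 0 < Q c" using Qs[of 0 c] c by simp
    moreover have "Q c < Q ?L" using Qs[of c ?L] c by simp
    ultimately show "x \<in> {1..<m}" using Q0 QL c by simp
  qed
  have injQ: "inj_on Q {1..<?L}"
  proof (rule inj_onI)
    fix x y assume "x \<in> {1..<?L}" "y \<in> {1..<?L}" "Q x = Q y"
    then show "x = y" using Qs[of x y] Qs[of y x] by (cases x y rule: linorder_cases) auto
  qed
  have sl: "sorted_list_of_set J = map Q [1..<?L]"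
  proof -
    have fin: "finite J" unfolding J_def by simp
    have A: "sorted_wrt (<) (map Q [1..<?L])"
      unfolding sorted_wrt_iff_nth_less using Qs by simp
    have B: "set (map Q [1..<?L]) = J" unfolding J_def by simp
    have C: "length (map Q [1..<?L]) = card J" unfolding J_def using card_image[OF injQ] by simp
    show ?thesis using sorted_list_of_set_unique[OF fin, of "map Q [1..<?L]"] A B C by blast
  qed
  have "comp m J = map2 (-) (map Q [1..<?L] @ [m]) (0 # map Q [1..<?L])"
    using m sl by (simp add: comp_def Let_def)
  also have "\<dots> = \<beta>"
  proof (rule nth_equalityI)
    show "length (map2 (-) (map Q [1..<?L] @ [m]) (0 # map Q [1..<?L])) = length \<beta>" using L1 by simp
    fix k assume "k < length (map2 (-) (map Q [1..<?L] @ [m]) (0 # map Q [1..<?L]))"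
    then have k: "k < ?L" using L1 by simp
    have a: "(map Q [1..<?L] @ [m]) ! k = Q (Suc k)"
    proof (cases "k < ?L - 1")
      case True then show ?thesis by (simp add: nth_append)
    next
      case False
      then have kk: "k = ?L - 1" using k by simp
      then have "Suc k = ?L" using L1 by simp
      then show ?thesis using QL kk by (simp add: nth_append)
    qed
    have c: "(0 # map Q [1..<?L]) ! k = Q k"
    proof (cases k)
      case 0 then show ?thesis using Q0 by simp
    next
      case (Suc k') then show ?thesis using k by simp
    qed
    have "map2 (-) (map Q [1..<?L] @ [m]) (0 # map Q [1..<?L]) ! k = Q (Suc k) - Q k"
      using map2_nth[of k "map Q [1..<?L] @ [m]" "0 # map Q [1..<?L]" "(-)"] k L1 a c by simp
    also have "\<dots> = \<beta> ! k" unfolding Q_def using sum_take_Suc[OF k] by simp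
    finally show "map2 (-) (map Q [1..<?L] @ [m]) (0 # map Q [1..<?L]) ! k = \<beta> ! k" .
  qed
  finally show ?thesis using Jsub by blast
qed

lemma is_comp_Nil: "is_comp []" unfolding is_comp_def by simp

lemma subD: "J \<subseteq> {a..<b} \<Longrightarrow> x \<in> J \<Longrightarrow> a \<le> x \<and> x < (b::nat)"
  by (drule subsetD) auto

lemma comp_inj_sets:
  assumes "J \<subseteq> {1..<(m::nat)}" "J0 \<subseteq> {1..<m}" "insert 0 (insert m J) = insert 0 (insert m J0)"
  shows "J = J0"
proof -
  have "0 \<notin> J" "m \<notin> J" "0 \<notin> J0" "m \<notin> J0" using subD[OF assms(1)] subD[OF assms(2)] by force+
  then have "J = insert 0 (insert m J) - {0, m}" "J0 = insert 0 (insert m J0) - {0, m}" by auto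
  then show ?thesis using assms(3) by simp
qed

lemma sum_list_zero_comp: "is_comp xs \<Longrightarrow> sum_list xs = 0 \<Longrightarrow> xs = []"
  unfolding is_comp_def by (cases xs) auto

lemma LL:
  assumes I: "I \<subseteq> {1..<m}"
  shows "Lfun m I e = (if LCb m I e then 1 else 0)"
proof -
  let ?SJ = "{J. I \<subseteq> J \<and> J \<subseteq> {1..<m}}"
  have finSJ: "finite ?SJ" by (rule finite_subset[of _ "Pow {1..<m}"]) auto
  have Ldef: "Lfun m I e = (\<Sum>J\<in>?SJ. M (comp m J) e)" unfolding Lfun_def by simp
  show ?thesis
  proof (cases "m = 0")
    case True
    then have SJ: "?SJ = {{}}" using I by auto
    have c0: "comp m {} = []" using True by (simp add: comp_def)
    have "Lfun m I e = M [] e" using Ldef SJ c0 by simp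
    also have "\<dots> = (if finite (supp e) \<and> [] = nz e then 1 else 0)" by (rule M_eq[OF is_comp_Nil])
    also have "(finite (supp e) \<and> [] = nz e) \<longleftrightarrow> LCb m I e"
    proof
      assume a: "finite (supp e) \<and> [] = nz e"
      then obtain B where B: "bnd e B" using fin_bnd by blast
      then have "Cb e B = 0" using Cb_bnd_nz[OF _ B] a by simp
      moreover have "I \<subseteq> range (Cb e)" using I True by simp
      ultimately show "LCb m I e" unfolding LCb_def using B True by blast
    next
      assume "LCb m I e"
      then obtain B where B: "bnd e B" "Cb e B = m" unfolding LCb_def by blast
      then have f: "finite (supp e)" using fin_bnd by blast
      then have "sum_list (nz e) = 0" using Cb_bnd_nz[OF f B(1)] B(2) True by simp
      then have "nz e = []" using sum_list_zero_comp is_comp_nz by blast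
      then show "finite (supp e) \<and> [] = nz e" using f by simp
    qed
    finally show ?thesis .
  next
    case False
    then have m: "0 < m" by simp
    have Mterm: "M (comp m J) e = (if finite (supp e) \<and> comp m J = nz e then 1 else 0)"
      if "J \<in> ?SJ" for J
      using M_eq[of "comp m J" e] C1[of J m] that m by simp
    show ?thesis
    proof (cases "LCb m I e")
      case True
      then obtain B where B: "bnd e B" "Cb e B = m" and IR: "I \<subseteq> range (Cb e)"
        unfolding LCb_def by blast
      have f: "finite (supp e)" using B fin_bnd by blast
      have snz: "sum_list (nz e) = m" using Cb_bnd_nz[OF f B(1)] B(2) by simp
      obtain J0 where J0: "J0 \<subseteq> {1..<m}" "comp m J0 = nz e" using C2[OF is_comp_nz snz m] by blast
      have psJ0: "psall (nz e) = insert 0 (insert m J0)" using C1[OF J0(1) m] J0(2) by simp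
      have "I \<subseteq> insert 0 (insert m J0)" using IR range_Cb[OF f] psJ0 by simp
      then have IJ0: "I \<subseteq> J0" using subD[OF I] by force
      have "Lfun m I e = (\<Sum>J\<in>?SJ. if J = J0 then 1 else 0)"
        unfolding Ldef
      proof (rule sum.cong[OF refl])
        fix J assume J: "J \<in> ?SJ"
        have "comp m J = nz e \<longleftrightarrow> J = J0"
        proof
          assume "comp m J = nz e"
          then have "insert 0 (insert m J) = insert 0 (insert m J0)"
            using C1[of J m] C1[OF J0(1) m] J m J0(2) by simp
          then show "J = J0" using comp_inj_sets[of J m J0] J J0(1) by simp
        qed (use J0 in simp)
        then show "M (comp m J) e = (if J = J0 then 1 else 0)" using Mterm[OF J] f by simp
      qed
      also have "\<dots> = 1" using finSJ IJ0 J0(1) by (simp add: sum.delta)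
      finally show ?thesis using True by simp
    next
      case False
      have "Lfun m I e = (\<Sum>J\<in>?SJ. 0)"
        unfolding Ldef
      proof (rule sum.cong[OF refl])
        fix J assume J: "J \<in> ?SJ"
        have "\<not> (finite (supp e) \<and> comp m J = nz e)"
        proof
          assume a: "finite (supp e) \<and> comp m J = nz e"
          then obtain B where B: "bnd e B" using fin_bnd by blast
          have c1: "is_comp (comp m J) \<and> sum_list (comp m J) = m \<and> psall (comp m J) = insert 0 (insert m J)"
            using C1[of J m] J m by simp
          have "Cb e B = m" using Cb_bnd_nz[OF _ B] a c1 by simp
          moreover have "I \<subseteq> range (Cb e)" using range_Cb[of e] a c1 J by auto
          ultimately show False using False B unfolding LCb_def by blast
        qed
        then show "M (comp m J) e = 0" using Mterm[OF J] by simp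
      qed
      then show ?thesis using False by simp
    qed
  qed
qed

lemma LL_F:
  assumes I: "I \<subseteq> {1..<m}"
  shows "Lfun m I e = (if LF m I e then 1 else 0)"
  using LL[OF I] W9[OF I] by simp

lemma prod_if_neutral:
  assumes "finite X"
  shows "(\<Prod>i\<in>X. if i \<in> L then 1 else f i) = (\<Prod>i\<in>X - L. f i)"
proof -
  have "(\<Prod>i\<in>X. if i \<in> L then 1 else f i) = (\<Prod>i\<in>X - L. if i \<in> L then 1 else f i)"
    by (rule prod.mono_neutral_right) (use assms in auto)
  also have "\<dots> = (\<Prod>i\<in>X - L. f i)" by (rule prod.cong) auto
  finally show ?thesis .
qed

lemma prod_split_set:
  assumes "finite X" "S \<subseteq> X"
  shows "(\<Prod>i\<in>X. F i (i \<in> S)) = (\<Prod>i\<in>S. F i True) * (\<Prod>i\<in>X - S. F i False)"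
proof -
  have "(\<Prod>i\<in>X. F i (i \<in> S)) = (\<Prod>i\<in>S. F i (i \<in> S)) * (\<Prod>i\<in>X - S. F i (i \<in> S))"
    using prod.subset_diff[OF assms(2) assms(1), of "\<lambda>i. F i (i \<in> S)"] by (simp add: mult.commute)
  also have "(\<Prod>i\<in>S. F i (i \<in> S)) = (\<Prod>i\<in>S. F i True)" by (rule prod.cong) auto
  also have "(\<Prod>i\<in>X - S. F i (i \<in> S)) = (\<Prod>i\<in>X - S. F i False)" by (rule prod.cong) auto
  finally show ?thesis .
qed

lemma sum_pow_prod:
  fixes F :: "nat \<Rightarrow> bool \<Rightarrow> complex"
  assumes "finite X"
  shows "(\<Sum>S\<in>Pow X. \<Prod>i\<in>X. F i (i \<in> S)) = (\<Prod>i\<in>X. F i True + F i False)"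
proof -
  have "(\<Prod>i\<in>X. F i True + F i False) = (\<Sum>S\<in>Pow X. (\<Prod>i\<in>S. F i True) * (\<Prod>i\<in>X - S. F i False))"
    by (rule prod_add[OF assms])
  also have "\<dots> = (\<Sum>S\<in>Pow X. \<Prod>i\<in>X. F i (i \<in> S))"
  proof (rule sum.cong[OF refl])
    fix S assume "S \<in> Pow X"
    then show "(\<Prod>i\<in>S. F i True) * (\<Prod>i\<in>X - S. F i False) = (\<Prod>i\<in>X. F i (i \<in> S))"
      using prod_split_set[OF assms, of S F] by simp
  qed
  finally show ?thesis by simp
qed

definition gS :: "nat set \<Rightarrow> nat \<Rightarrow> nat" where
  "gS S = (\<lambda>i. if i \<in> S then 1 else 0)"

lemma gS_Qn: "1 < \<nu> \<Longrightarrow> S \<subseteq> {1..<N} \<Longrightarrow> gS S \<in> Qn \<nu> N"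
  unfolding gS_def Qn_def QS_def by auto

lemma chi_gS:
  "chi \<nu> N L (gS S) = (\<Prod>i\<in>{1..<N}. if i \<in> L then 1 else (if i \<in> S then psi \<nu> 1 else 1))"
proof -
  have "chi \<nu> N L (gS S) = (\<Prod>i\<in>{1..<N} - L. (if i \<in> S then psi \<nu> 1 else 1))"
    unfolding chi_def gS_def by (rule prod.cong) (auto simp: psi_def)
  also have "\<dots> = (\<Prod>i\<in>{1..<N}. if i \<in> L then 1 else (if i \<in> S then psi \<nu> 1 else 1))"
    by (rule prod_if_neutral[symmetric]) simp
  finally show ?thesis .
qed

lemma chi_ind:
  assumes nu: "1 < \<nu>"
    and h: "\<forall>g\<in>Qn \<nu> N. (\<Sum>I\<in>Pow {1..<N}. d I * chi \<nu> N I g) = 0"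
    and K: "K \<in> Pow {1..<N}"
  shows "d K = 0"
proof -
  let ?X = "{1..<N}"
  let ?r = "psi \<nu> 1"
  have r: "?r = - 1 / (of_nat \<nu> - 1)" by (simp add: psi_def)
  have nz: "(of_nat \<nu> - 1 :: complex) \<noteq> 0" using nu by simp
  have r1: "?r - 1 \<noteq> 0"
  proof
    assume "?r - 1 = 0"
    then have "- 1 / (of_nat \<nu> - 1) = (1::complex)" using r by simp
    then have "- 1 = (of_nat \<nu> - 1 :: complex)" using nz by (simp add: field_simps)
    then have "(of_nat \<nu> :: complex) = 0" by (simp add: algebra_simps)
    then show False using nu by simp
  qed
  define wt where "wt i b = (if b then (if i \<in> K then - 1 / (?r - 1) else 1 / (?r - 1))
                               else (if i \<in> K then ?r / (?r - 1) else - 1 / (?r - 1)))" for i :: nat and b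
  define u where "u L i b = (if i \<in> L then 1 else if b then ?r else 1)" for L :: "nat set" and i :: nat and b
  define w where "w S = (\<Prod>i\<in>?X. wt i (i \<in> S))" for S
  have key: "(\<Sum>S\<in>Pow ?X. w S * chi \<nu> N L (gS S)) = (if K = L then 1 else 0)" if hL: "L \<in> Pow ?X" for L :: "nat set"
  proof -
    have "(\<Sum>S\<in>Pow ?X. w S * chi \<nu> N L (gS S)) = (\<Sum>S\<in>Pow ?X. \<Prod>i\<in>?X. wt i (i \<in> S) * u L i (i \<in> S))"
      unfolding w_def chi_gS u_def by (simp add: prod.distrib)
    also have "\<dots> = (\<Prod>i\<in>?X. wt i True * u L i True + wt i False * u L i False)"
      using sum_pow_prod[of ?X "\<lambda>i b. wt i b * u L i b"] by simp
    also have "\<dots> = (\<Prod>i\<in>?X. if (i \<in> K) = (i \<in> L) then 1 else 0)"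
    proof (rule prod.cong[OF refl])
      fix i
      show "wt i True * u L i True + wt i False * u L i False = (if (i \<in> K) = (i \<in> L) then 1 else 0)"
        unfolding wt_def u_def using r1
        by (cases "i \<in> K"; cases "i \<in> L") (simp_all add: divide_simps)
    qed
    also have "\<dots> = (if K = L then 1 else 0)"
    proof (cases "K = L")
      case True then show ?thesis by simp
    next
      case False
      then obtain i where i: "i \<in> ?X" "(i \<in> K) \<noteq> (i \<in> L)" using K hL by blast
      then show ?thesis using False by (intro trans[OF prod_zero]) (auto intro!: bexI[of _ i])
    qed
    finally show ?thesis .
  qed
  have "0 = (\<Sum>S\<in>Pow ?X. w S * (\<Sum>I\<in>Pow ?X. d I * chi \<nu> N I (gS S)))"
    using h gS_Qn[OF nu] by simp
  also have "\<dots> = (\<Sum>I\<in>Pow ?X. d I * (\<Sum>S\<in>Pow ?X. w S * chi \<nu> N I (gS S)))"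
  proof -
    have "(\<Sum>S\<in>Pow ?X. w S * (\<Sum>I\<in>Pow ?X. d I * chi \<nu> N I (gS S)))
        = (\<Sum>S\<in>Pow ?X. \<Sum>I\<in>Pow ?X. d I * (w S * chi \<nu> N I (gS S)))"
      by (simp add: sum_distrib_left mult.left_commute)
    also have "\<dots> = (\<Sum>I\<in>Pow ?X. \<Sum>S\<in>Pow ?X. d I * (w S * chi \<nu> N I (gS S)))"
      by (rule sum.swap)
    also have "\<dots> = (\<Sum>I\<in>Pow ?X. d I * (\<Sum>S\<in>Pow ?X. w S * chi \<nu> N I (gS S)))"
      by (simp add: sum_distrib_left)
    finally show ?thesis .
  qed
  also have "\<dots> = (\<Sum>I\<in>Pow ?X. d I * (if K = I then 1 else 0))"
  proof (rule sum.cong[OF refl])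
    fix I assume "I \<in> Pow ?X"
    then show "d I * (\<Sum>S\<in>Pow ?X. w S * chi \<nu> N I (gS S)) = d I * (if K = I then 1 else 0)"
      using key[of I] by simp
  qed
  also have "\<dots> = (\<Sum>I\<in>Pow ?X. if K = I then d I else 0)"
    by (rule sum.cong) auto
  also have "\<dots> = d K" using K by (simp add: sum.delta')
  finally show ?thesis by simp
qed

lemma ch_eq:
  assumes nu: "1 < \<nu>" and rep: "\<forall>g\<in>Qn \<nu> N. f g = (\<Sum>I\<in>Pow {1..<N}. c I * chi \<nu> N I g)"
  shows "ch \<nu> N f = (\<lambda>e. \<Sum>I\<in>Pow {1..<N}. c I * Lfun N I e)"
  unfolding ch_def
proof (rule the_equality)
  show "\<exists>c'. (\<forall>g\<in>Qn \<nu> N. f g = (\<Sum>I\<in>Pow {1..<N}. c' I * chi \<nu> N I g)) \<and>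
      (\<lambda>e. \<Sum>I\<in>Pow {1..<N}. c I * Lfun N I e) = (\<lambda>e. \<Sum>I\<in>Pow {1..<N}. c' I * Lfun N I e)"
    using rep by blast
next
  fix q assume "\<exists>c'. (\<forall>g\<in>Qn \<nu> N. f g = (\<Sum>I\<in>Pow {1..<N}. c' I * chi \<nu> N I g)) \<and>
      q = (\<lambda>e. \<Sum>I\<in>Pow {1..<N}. c' I * Lfun N I e)"
  then obtain c' where c': "\<forall>g\<in>Qn \<nu> N. f g = (\<Sum>I\<in>Pow {1..<N}. c' I * chi \<nu> N I g)"
    and q: "q = (\<lambda>e. \<Sum>I\<in>Pow {1..<N}. c' I * Lfun N I e)" by blast
  have "\<forall>g\<in>Qn \<nu> N. (\<Sum>I\<in>Pow {1..<N}. (c' I - c I) * chi \<nu> N I g) = 0"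
  proof
    fix g assume g: "g \<in> Qn \<nu> N"
    have "(\<Sum>I\<in>Pow {1..<N}. (c' I - c I) * chi \<nu> N I g)
        = (\<Sum>I\<in>Pow {1..<N}. c' I * chi \<nu> N I g) - (\<Sum>I\<in>Pow {1..<N}. c I * chi \<nu> N I g)"
      by (simp add: algebra_simps sum_subtractf)
    also have "\<dots> = 0" using c' rep g by simp
    finally show "(\<Sum>I\<in>Pow {1..<N}. (c' I - c I) * chi \<nu> N I g) = 0" .
  qed
  then have "c' I = c I" if "I \<in> Pow {1..<N}" for I
    using chi_ind[OF nu, of N "\<lambda>I. c' I - c I" I] that by simp
  then show "q = (\<lambda>e. \<Sum>I\<in>Pow {1..<N}. c I * Lfun N I e)" unfolding q
    by (intro ext sum.cong) auto
qed

lemma ch2_eq: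
  assumes nu: "1 < \<nu>"
    and rep: "\<forall>a\<in>Qn \<nu> k. \<forall>b\<in>Qn \<nu> l. F a b = (\<Sum>I\<in>Pow {1..<k}. \<Sum>J\<in>Pow {1..<l}. c I J * (chi \<nu> k I a * chi \<nu> l J b))"
  shows "ch2 \<nu> k l F = (\<lambda>p. \<Sum>I\<in>Pow {1..<k}. \<Sum>J\<in>Pow {1..<l}. c I J * tens (Lfun k I) (Lfun l J) p)"
  unfolding ch2_def
proof (rule the_equality)
  show "\<exists>c'. (\<forall>a\<in>Qn \<nu> k. \<forall>b\<in>Qn \<nu> l. F a b = (\<Sum>I\<in>Pow {1..<k}. \<Sum>J\<in>Pow {1..<l}. c' I J * (chi \<nu> k I a * chi \<nu> l J b))) \<and>
    (\<lambda>p. \<Sum>I\<in>Pow {1..<k}. \<Sum>J\<in>Pow {1..<l}. c I J * tens (Lfun k I) (Lfun l J) p) =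
    (\<lambda>p. \<Sum>I\<in>Pow {1..<k}. \<Sum>J\<in>Pow {1..<l}. c' I J * tens (Lfun k I) (Lfun l J) p)"
    using rep by blast
next
  fix q assume "\<exists>c'. (\<forall>a\<in>Qn \<nu> k. \<forall>b\<in>Qn \<nu> l. F a b = (\<Sum>I\<in>Pow {1..<k}. \<Sum>J\<in>Pow {1..<l}. c' I J * (chi \<nu> k I a * chi \<nu> l J b))) \<and>
    q = (\<lambda>p. \<Sum>I\<in>Pow {1..<k}. \<Sum>J\<in>Pow {1..<l}. c' I J * tens (Lfun k I) (Lfun l J) p)"
  then obtain c' where c': "\<forall>a\<in>Qn \<nu> k. \<forall>b\<in>Qn \<nu> l. F a b = (\<Sum>I\<in>Pow {1..<k}. \<Sum>J\<in>Pow {1..<l}. c' I J * (chi \<nu> k I a * chi \<nu> l J b))"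
    and q: "q = (\<lambda>p. \<Sum>I\<in>Pow {1..<k}. \<Sum>J\<in>Pow {1..<l}. c' I J * tens (Lfun k I) (Lfun l J) p)" by blast
  define d where "d I J = c' I J - c I J" for I J
  have z: "(\<Sum>I\<in>Pow {1..<k}. (\<Sum>J\<in>Pow {1..<l}. d I J * chi \<nu> l J b) * chi \<nu> k I a) = 0"
    if a: "a \<in> Qn \<nu> k" and b: "b \<in> Qn \<nu> l" for a b
  proof -
    have "(\<Sum>I\<in>Pow {1..<k}. (\<Sum>J\<in>Pow {1..<l}. d I J * chi \<nu> l J b) * chi \<nu> k I a)
       = (\<Sum>I\<in>Pow {1..<k}. \<Sum>J\<in>Pow {1..<l}. c' I J * (chi \<nu> k I a * chi \<nu> l J b))
         - (\<Sum>I\<in>Pow {1..<k}. \<Sum>J\<in>Pow {1..<l}. c I J * (chi \<nu> k I a * chi \<nu> l J b))"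
      unfolding d_def by (simp add: algebra_simps sum_subtractf sum_distrib_left sum_distrib_right)
    also have "\<dots> = 0" using c' rep a b by simp
    finally show ?thesis .
  qed
  have z2: "(\<Sum>J\<in>Pow {1..<l}. d I J * chi \<nu> l J b) = 0"
    if I: "I \<in> Pow {1..<k}" and b: "b \<in> Qn \<nu> l" for I b
  proof -
    have "\<forall>a\<in>Qn \<nu> k. (\<Sum>I\<in>Pow {1..<k}. (\<Sum>J\<in>Pow {1..<l}. d I J * chi \<nu> l J b) * chi \<nu> k I a) = 0"
      using z b by blast
    then show ?thesis using chi_ind[OF nu, of k "\<lambda>I. \<Sum>J\<in>Pow {1..<l}. d I J * chi \<nu> l J b" I] I by simp
  qed
  have "d I J = 0" if I: "I \<in> Pow {1..<k}" and J: "J \<in> Pow {1..<l}" for I J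
    using chi_ind[OF nu, of l "d I" J] z2[OF I] J by simp
  then have "c' I J = c I J" if "I \<in> Pow {1..<k}" "J \<in> Pow {1..<l}" for I J
    using that unfolding d_def by fastforce
  then show "q = (\<lambda>p. \<Sum>I\<in>Pow {1..<k}. \<Sum>J\<in>Pow {1..<l}. c I J * tens (Lfun k I) (Lfun l J) p)"
    unfolding q by (intro ext sum.cong refl) auto
qed

definition Kset :: "nat \<Rightarrow> nat set \<Rightarrow> nat set \<Rightarrow> nat set \<Rightarrow> nat set" where
  "Kset N A I J = {s\<in>{1..<N}. (s \<in> A \<and> Suc s \<notin> A) \<or> (s \<notin> A \<and> Suc s \<notin> A \<and> rk ({1..N} - A) s \<in> I)
       \<or> (s \<in> A \<and> Suc s \<in> A \<and> rk A s \<in> J)}"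

lemma conn_max: "Max ` conn A = {s\<in>A. Suc s \<notin> A}"
proof
  show "Max ` conn A \<subseteq> {s\<in>A. Suc s \<notin> A}"
  proof
    fix x assume "x \<in> Max ` conn A"
    then obtain B where B: "B \<in> conn A" "x = Max B" by auto
    then obtain a b where ab: "a \<le> b" "B = {a..b}" unfolding conn_def consec_def by blast
    have BA: "B \<subseteq> A" and mx: "\<And>C. C \<subseteq> A \<Longrightarrow> consec C \<Longrightarrow> B \<subseteq> C \<Longrightarrow> C = B"
      using B(1) unfolding conn_def by blast+
    have "Max {a..b} = b" using ab(1) by (intro Max_eqI) auto
    then have xb: "x = b" using B(2) ab(2) by simp
    have "b \<in> A" using ab BA by auto
    moreover have "Suc b \<notin> A"
    proof
      assume "Suc b \<in> A"
      then have "{a..Suc b} \<subseteq> A" using BA ab by (auto simp: le_Suc_eq)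
      moreover have "consec {a..Suc b}" unfolding consec_def using ab by auto
      moreover have "B \<subseteq> {a..Suc b}" using ab by auto
      ultimately have "{a..Suc b} = B" using mx by blast
      then show False using ab by (metis atLeastAtMost_iff le_Suc_eq not_less_eq_eq order_refl)
    qed
    ultimately show "x \<in> {s\<in>A. Suc s \<notin> A}" using xb by simp
  qed
  show "{s\<in>A. Suc s \<notin> A} \<subseteq> Max ` conn A"
  proof
    fix s assume s: "s \<in> {s\<in>A. Suc s \<notin> A}"
    define a where "a = (LEAST a. {a..s} \<subseteq> A)"
    have "{s..s} \<subseteq> A" using s by simp
    then have aA: "{a..s} \<subseteq> A" unfolding a_def by (rule LeastI)
    have amin: "\<And>c. {c..s} \<subseteq> A \<Longrightarrow> a \<le> c" unfolding a_def by (rule Least_le)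
    have as: "a \<le> s" using amin \<open>{s..s} \<subseteq> A\<close> by blast
    have "{a..s} \<in> conn A" unfolding conn_def
    proof (intro CollectI conjI allI impI)
      show "{a..s} \<subseteq> A" by (rule aA)
      show "consec {a..s}" unfolding consec_def using as by blast
      fix C assume C: "C \<subseteq> A \<and> consec C \<and> {a..s} \<subseteq> C"
      then obtain c d where cd: "c \<le> d" "C = {c..d}" unfolding consec_def by blast
      have "c \<le> a" "s \<le> d" using C cd as by auto
      have "d \<le> s"
      proof (rule ccontr)
        assume "\<not> d \<le> s"
        then have "Suc s \<in> C" using cd \<open>c \<le> a\<close> as by auto
        then show False using C s by auto
      qed
      have "d = s" using \<open>d \<le> s\<close> \<open>s \<le> d\<close> by simp
      then have "{c..s} \<subseteq> A" using C cd by simp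
      then have "a \<le> c" by (rule amin)
      then show "C = {a..s}" using cd \<open>c \<le> a\<close> \<open>d \<le> s\<close> \<open>s \<le> d\<close> by simp
    qed
    moreover have "Max {a..s} = s" using as by (intro Max_eqI) auto
    ultimately show "s \<in> Max ` conn A" by (metis image_eqI)
  qed
qed

lemma c1_eq: "c1 N A = {s\<in>A. Suc s \<notin> A} - {N}"
  unfolding c1_def conn_max by simp

lemma c2_eq: "c2 N A = {s. s \<in> {1..<N} \<and> s \<notin> A \<and> Suc s \<in> A}"
proof -
  have "c2 N A = {s\<in>{1..N} - A. Suc s \<notin> {1..N} - A} - {N}" unfolding c2_def conn_max by simp
  also have "\<dots> = {s. s \<in> {1..<N} \<and> s \<notin> A \<and> Suc s \<in> A}" by auto
  finally show ?thesis .
qed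

lemma prod_Q_P:
  assumes fin: "finite Q" and PQ: "P \<subseteq> Q"
    and z: "\<And>s. s \<in> Q - P \<Longrightarrow> h s = 0" and e: "\<And>s. s \<in> P \<Longrightarrow> h s = g s"
  shows "(\<Prod>s\<in>Q. psi \<nu> (h s)) = (\<Prod>s\<in>P. psi \<nu> (g s))"
proof -
  have "(\<Prod>s\<in>Q. psi \<nu> (h s)) = (\<Prod>s\<in>P. psi \<nu> (h s))"
    by (rule prod.mono_neutral_right[OF fin PQ]) (simp add: z psi_def)
  also have "\<dots> = (\<Prod>s\<in>P. psi \<nu> (g s))" by (rule prod.cong) (auto simp: e)
  finally show ?thesis .
qed

lemma mA_chi:
  fixes \<nu> m n :: nat
  assumes m: "1 \<le> m" and n: "1 \<le> n" and A: "A \<subseteq> {1..m+n}" and cA: "card A = n"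
  shows "mA \<nu> m n A (chi \<nu> m I) (chi \<nu> n J) g = chi \<nu> (m+n) (Kset (m+n) A I J) g"
proof -
  define N where "N = m + n"
  define X where "X = {1..N} - A"
  have AN: "A \<subseteq> {1..N}" using A N_def by simp
  have finA: "finite A" using AN finite_subset by blast
  have finX: "finite X" unfolding X_def by simp
  have cX: "card X = m" unfolding X_def using AN cA N_def card_Diff_subset[OF finA AN] by simp
  have XN: "X \<subseteq> {1..N}" unfolding X_def by auto
  have c1e: "c1 N A = {s\<in>A. Suc s \<notin> A} - {N}" by (rule c1_eq)
  have c2e: "c2 N A = {s. s \<in> {1..<N} \<and> s \<notin> A \<and> Suc s \<in> A}" by (rule c2_eq)
  define h where "h = (\<lambda>i. if i \<in> {1..<N} - cc N A then g i else 0)"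
  have hc1: "h s = 0" if "s \<in> A" "Suc s \<notin> A" for s
    unfolding h_def cc_def c1e using that by auto
  have hc2: "h s = 0" if "s \<notin> A" "Suc s \<in> A" for s
    unfolding h_def cc_def c2e using that by auto
  have hN: "h N = 0" unfolding h_def by simp
  have hg: "h s = g s" if "s \<in> {1..<N}" "(s \<in> A) = (Suc s \<in> A)" for s
    unfolding h_def cc_def c1e c2e using that by auto
  have mAe: "mA \<nu> m n A (chi \<nu> m I) (chi \<nu> n J) g =
      (\<Prod>i\<in>c2 N A. psi \<nu> (g i)) * sA \<nu> m n A (chi \<nu> m I) (chi \<nu> n J) h"
    unfolding mA_def h_def N_def using m n by simp
  have sAe: "sA \<nu> m n A (chi \<nu> m I) (chi \<nu> n J) h =
     chi \<nu> m I (\<lambda>k. if k \<in> {1..<m} then h (en X k) else 0) * psi \<nu> (h (en X m)) *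
     chi \<nu> n J (\<lambda>k. if k \<in> {1..<n} then h (en A k) else 0) * psi \<nu> (h (en A n))"
    unfolding sA_def Let_def en_def X_def N_def by simp
  have lastX: "psi \<nu> (h (en X m)) = 1"
  proof -
    let ?x = "en X m"
    have x: "?x \<in> X" "rk X ?x = m" using en_props[OF finX, of m] m cX by auto
    show ?thesis
    proof (cases "?x = N")
      case True then show ?thesis using hN by (simp add: psi_def)
    next
      case False
      have "Suc ?x \<notin> X"
      proof
        assume "Suc ?x \<in> X"
        then have "rk X (Suc ?x) = m + 1" using rk_Suc[OF finX, of ?x] x by simp
        then show False using rk_le_card[OF finX, of "Suc ?x"] cX by simp
      qed
      moreover have "?x < N" using x XN False by fastforce
      ultimately have "Suc ?x \<in> A" unfolding X_def by simp
      moreover have "?x \<notin> A" using x unfolding X_def by simp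
      ultimately show ?thesis using hc2 by (simp add: psi_def)
    qed
  qed
  have lastA: "psi \<nu> (h (en A n)) = 1"
  proof -
    let ?y = "en A n"
    have y: "?y \<in> A" "rk A ?y = n" using en_props[OF finA, of n] n cA by auto
    have "Suc ?y \<notin> A"
    proof
      assume "Suc ?y \<in> A"
      then have "rk A (Suc ?y) = n + 1" using rk_Suc[OF finA, of ?y] y by simp
      then show False using rk_le_card[OF finA, of "Suc ?y"] cA by simp
    qed
    then show ?thesis using hc1 y by (simp add: psi_def)
  qed
  define P1 where "P1 = {s\<in>{1..<N}. s \<notin> A \<and> Suc s \<notin> A \<and> rk X s \<notin> I}"
  define P2 where "P2 = {s\<in>{1..<N}. s \<in> A \<and> Suc s \<in> A \<and> rk A s \<notin> J}"
  define Q1 where "Q1 = en X ` ({1..<m} - I)"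
  define Q2 where "Q2 = en A ` ({1..<n} - J)"
  have Q1m: "s \<in> Q1 \<longleftrightarrow> s \<in> X \<and> rk X s < m \<and> rk X s \<notin> I" for s
  proof
    assume "s \<in> Q1"
    then obtain k where k: "k \<in> {1..<m} - I" "s = en X k" unfolding Q1_def by auto
    then show "s \<in> X \<and> rk X s < m \<and> rk X s \<notin> I" using en_props[OF finX, of k] cX by auto
  next
    assume s: "s \<in> X \<and> rk X s < m \<and> rk X s \<notin> I"
    then have "rk X s \<in> {1..<m} - I" using rk_bounds[OF finX, of s] by auto
    moreover have "en X (rk X s) = s" using en_rk[OF finX] s by simp
    ultimately show "s \<in> Q1" unfolding Q1_def by (metis image_eqI)
  qed
  have Q2m: "s \<in> Q2 \<longleftrightarrow> s \<in> A \<and> rk A s < n \<and> rk A s \<notin> J" for s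
  proof
    assume "s \<in> Q2"
    then obtain k where k: "k \<in> {1..<n} - J" "s = en A k" unfolding Q2_def by auto
    then show "s \<in> A \<and> rk A s < n \<and> rk A s \<notin> J" using en_props[OF finA, of k] cA by auto
  next
    assume s: "s \<in> A \<and> rk A s < n \<and> rk A s \<notin> J"
    then have "rk A s \<in> {1..<n} - J" using rk_bounds[OF finA, of s] by auto
    moreover have "en A (rk A s) = s" using en_rk[OF finA] s by simp
    ultimately show "s \<in> Q2" unfolding Q2_def by (metis image_eqI)
  qed
  have f1: "chi \<nu> m I (\<lambda>k. if k \<in> {1..<m} then h (en X k) else 0) = (\<Prod>s\<in>P1. psi \<nu> (g s))"
  proof -
    have "chi \<nu> m I (\<lambda>k. if k \<in> {1..<m} then h (en X k) else 0) = (\<Prod>k\<in>{1..<m} - I. psi \<nu> (h (en X k)))"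
      unfolding chi_def by (rule prod.cong) auto
    also have "\<dots> = (\<Prod>s\<in>Q1. psi \<nu> (h s))"
    proof -
      have "inj_on (en X) ({1..<m} - I)"
      proof (rule inj_onI)
        fix x y assume "x \<in> {1..<m} - I" "y \<in> {1..<m} - I" "en X x = en X y"
        then show "x = y" using en_strict[OF finX, of x y] en_strict[OF finX, of y x] cX
          by (cases x y rule: linorder_cases) auto
      qed
      then show ?thesis unfolding Q1_def by (simp add: prod.reindex)
    qed
    also have "\<dots> = (\<Prod>s\<in>P1. psi \<nu> (g s))"
    proof (rule prod_Q_P)
      show "finite Q1" unfolding Q1_def by simp
      show "P1 \<subseteq> Q1"
      proof
        fix s assume s: "s \<in> P1"
        then have sX: "s \<in> X" "Suc s \<in> X" unfolding P1_def X_def by auto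
        have "rk X s < rk X (Suc s)" using rk_Suc[OF finX, of s] sX by simp
        moreover have "rk X (Suc s) \<le> m" using rk_le_card[OF finX] cX by simp
        ultimately show "s \<in> Q1" using Q1m s sX unfolding P1_def by simp
      qed
      show "h s = 0" if "s \<in> Q1 - P1" for s
      proof -
        have s: "s \<in> X" "rk X s < m" "rk X s \<notin> I" using that Q1m by auto
        have "en X m \<in> X" "rk X (en X m) = m" using en_props[OF finX, of m] m cX by auto
        then have "s < en X m"
        proof -
          assume a: "en X m \<in> X" "rk X (en X m) = m"
          show "s < en X m"
          proof (rule ccontr)
            assume "\<not> s < en X m"
            then have "rk X (en X m) \<le> rk X s" using rk_mono[OF finX, of "en X m" s] by simp
            then show False using a s by simp
          qed
        qed
        then have "s < N" using \<open>en X m \<in> X\<close> XN by fastforce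
        then have "s \<in> {1..<N}" using s XN by auto
        moreover have "s \<notin> A" using s unfolding X_def by simp
        ultimately have "Suc s \<in> A" using that s unfolding P1_def by auto
        then show "h s = 0" using hc2 \<open>s \<notin> A\<close> by simp
      qed
      show "h s = g s" if "s \<in> P1" for s using that hg unfolding P1_def by auto
    qed
    finally show ?thesis .
  qed
  have f2: "chi \<nu> n J (\<lambda>k. if k \<in> {1..<n} then h (en A k) else 0) = (\<Prod>s\<in>P2. psi \<nu> (g s))"
  proof -
    have "chi \<nu> n J (\<lambda>k. if k \<in> {1..<n} then h (en A k) else 0) = (\<Prod>k\<in>{1..<n} - J. psi \<nu> (h (en A k)))"
      unfolding chi_def by (rule prod.cong) auto
    also have "\<dots> = (\<Prod>s\<in>Q2. psi \<nu> (h s))"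
    proof -
      have "inj_on (en A) ({1..<n} - J)"
      proof (rule inj_onI)
        fix x y assume "x \<in> {1..<n} - J" "y \<in> {1..<n} - J" "en A x = en A y"
        then show "x = y" using en_strict[OF finA, of x y] en_strict[OF finA, of y x] cA
          by (cases x y rule: linorder_cases) auto
      qed
      then show ?thesis unfolding Q2_def by (simp add: prod.reindex)
    qed
    also have "\<dots> = (\<Prod>s\<in>P2. psi \<nu> (g s))"
    proof (rule prod_Q_P)
      show "finite Q2" unfolding Q2_def by simp
      show "P2 \<subseteq> Q2"
      proof
        fix s assume s: "s \<in> P2"
        then have sA: "s \<in> A" "Suc s \<in> A" unfolding P2_def by auto
        have "rk A s < rk A (Suc s)" using rk_Suc[OF finA, of s] sA by simp
        moreover have "rk A (Suc s) \<le> n" using rk_le_card[OF finA] cA by simp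
        ultimately show "s \<in> Q2" using Q2m s sA unfolding P2_def by simp
      qed
      show "h s = 0" if "s \<in> Q2 - P2" for s
      proof -
        have s: "s \<in> A" "rk A s < n" "rk A s \<notin> J" using that Q2m by auto
        have "en A n \<in> A" "rk A (en A n) = n" using en_props[OF finA, of n] n cA by auto
        then have "s < en A n"
        proof -
          assume a: "en A n \<in> A" "rk A (en A n) = n"
          show "s < en A n"
          proof (rule ccontr)
            assume "\<not> s < en A n"
            then have "rk A (en A n) \<le> rk A s" using rk_mono[OF finA, of "en A n" s] by simp
            then show False using a s by simp
          qed
        qed
        then have "s < N" using \<open>en A n \<in> A\<close> AN by fastforce
        then have "s \<in> {1..<N}" using s AN by auto
        then have "Suc s \<notin> A" using that s unfolding P2_def by auto
        then show "h s = 0" using hc1 s by simp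
      qed
      show "h s = g s" if "s \<in> P2" for s using that hg unfolding P2_def by auto
    qed
    finally show ?thesis .
  qed
  have dec: "{1..<N} - Kset N A I J = c2 N A \<union> P1 \<union> P2"
    unfolding Kset_def c2e P1_def P2_def X_def by auto
  have disj: "c2 N A \<inter> P1 = {}" "(c2 N A \<union> P1) \<inter> P2 = {}"
    unfolding c2e P1_def P2_def by auto
  have finc2: "finite (c2 N A)" unfolding c2e by simp
  have finP1: "finite P1" "finite P2" unfolding P1_def P2_def by simp_all
  have "chi \<nu> N (Kset N A I J) g = (\<Prod>s\<in>c2 N A \<union> P1 \<union> P2. psi \<nu> (g s))"
    unfolding chi_def dec by simp
  also have "\<dots> = (\<Prod>s\<in>c2 N A. psi \<nu> (g s)) * (\<Prod>s\<in>P1. psi \<nu> (g s)) * (\<Prod>s\<in>P2. psi \<nu> (g s))"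
    using prod.union_disjoint[OF finite_UnI[OF finc2 finP1(1)] finP1(2) disj(2), of "\<lambda>s. psi \<nu> (g s)"]
      prod.union_disjoint[OF finc2 finP1(1) disj(1), of "\<lambda>s. psi \<nu> (g s)"]
    by simp
  finally have "chi \<nu> N (Kset N A I J) g = (\<Prod>s\<in>c2 N A. psi \<nu> (g s)) * (\<Prod>s\<in>P1. psi \<nu> (g s)) * (\<Prod>s\<in>P2. psi \<nu> (g s))" .
  then show ?thesis using mAe sAe lastX lastA f1 f2 N_def by simp
qed

lemma sum_ind_card:
  assumes "finite S"
  shows "(\<Sum>x\<in>S. if P x then (1::complex) else 0) = of_nat (card {x\<in>S. P x})"
proof -
  have "(\<Sum>x\<in>S. if P x then (1::complex) else 0) = (\<Sum>x\<in>{x\<in>S. P x}. 1)"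
    using sum.inter_filter[OF assms, of "\<lambda>_. (1::complex)" P] by simp
  also have "\<dots> = of_nat (card {x\<in>S. P x})" by simp
  finally show ?thesis .
qed

lemma W1gen: "finite X \<Longrightarrow> card {s\<in>X. h s < (i::nat)} = (\<Sum>j<i. card {s\<in>X. h s = j})"
proof (induction i)
  case 0 then show ?case by simp
next
  case (Suc i)
  have "{s\<in>X. h s < Suc i} = {s\<in>X. h s < i} \<union> {s\<in>X. h s = i}" by auto
  then have "card {s\<in>X. h s < Suc i} = card {s\<in>X. h s < i} + card {s\<in>X. h s = i}"
    using Suc.prems by (simp add: card_Un_disjoint disjoint_iff)
  then show ?case using Suc by simp
qed

lemma Cb_add: "Cb (\<lambda>i. a i + b i) j = Cb a j + Cb b j"
  unfolding Cb_def by (simp add: sum.distrib)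

lemma proj_wi:
  assumes "finite X" "X \<subseteq> {1..N}" "wi N h"
  shows "wi (card X) (\<lambda>k. h (en X k))"
  unfolding wi_def
proof (intro allI impI)
  fix k l assume kl: "1 \<le> k" "k \<le> l" "l \<le> card X"
  have "en X k \<le> en X l"
  proof (cases "k = l")
    case True then show ?thesis by simp
  next
    case False then show ?thesis using en_strict[OF assms(1), of k l] kl by simp
  qed
  moreover have "en X k \<in> X" "en X l \<in> X" using en_props[OF assms(1)] kl by auto
  then have "1 \<le> en X k" "en X l \<le> N" using assms(2) by auto
  ultimately show "h (en X k) \<le> h (en X l)" using assms(3) unfolding wi_def by blast
qed

lemma proj_cnt:
  assumes "finite X"
  shows "cnt (card X) (\<lambda>k. h (en X k)) = (\<lambda>i. card {s\<in>X. h s = i})"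
proof
  fix i
  have inj: "inj_on (en X) {k\<in>{1..card X}. h (en X k) = i}"
  proof (rule inj_onI)
    fix x y assume "x \<in> {k\<in>{1..card X}. h (en X k) = i}" "y \<in> {k\<in>{1..card X}. h (en X k) = i}" "en X x = en X y"
    then show "x = y" using en_strict[OF assms, of x y] en_strict[OF assms, of y x]
      by (cases x y rule: linorder_cases) auto
  qed
  have img: "en X ` {k\<in>{1..card X}. h (en X k) = i} = {s\<in>X. h s = i}"
  proof
    show "en X ` {k\<in>{1..card X}. h (en X k) = i} \<subseteq> {s\<in>X. h s = i}"
      using en_props[OF assms] by auto
    show "{s\<in>X. h s = i} \<subseteq> en X ` {k\<in>{1..card X}. h (en X k) = i}"
    proof
      fix s assume s: "s \<in> {s\<in>X. h s = i}"
      then have "rk X s \<in> {k\<in>{1..card X}. h (en X k) = i}"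
        using rk_bounds[OF assms, of s] en_rk[OF assms, of s] by auto
      moreover have "en X (rk X s) = s" using en_rk[OF assms] s by simp
      ultimately show "s \<in> en X ` {k\<in>{1..card X}. h (en X k) = i}" by (metis image_eqI)
    qed
  qed
  show "cnt (card X) (\<lambda>k. h (en X k)) i = card {s\<in>X. h s = i}"
    unfolding cnt_def using card_image[OF inj] img by simp
qed

lemma LF_h:
  assumes "wi N h" "cnt N h = e" "K \<subseteq> {1..<N}"
  shows "LF N K e \<longleftrightarrow> (\<forall>k\<in>K. h k < h (Suc k))"
proof
  assume "LF N K e"
  then obtain f where f: "wi N f" "cnt N f = e" "\<forall>k\<in>K. f k < f (Suc k)" unfolding LF_def by blast
  show "\<forall>k\<in>K. h k < h (Suc k)"
  proof
    fix k assume k: "k \<in> K"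
    then have kb: "1 \<le> k" "k < N" using subD[OF assms(3)] by auto
    have "f k = h k" using W5[OF f(1) assms(1)] f(2) assms(2) kb by simp
    moreover have "f (Suc k) = h (Suc k)" using W5[OF f(1) assms(1)] f(2) assms(2) kb by simp
    ultimately show "h k < h (Suc k)" using f(3) k by metis
  qed
next
  assume "\<forall>k\<in>K. h k < h (Suc k)"
  then show "LF N K e" unfolding LF_def using assms by blast
qed

lemma Kset_mem:
  "k \<in> Kset N A I J \<longleftrightarrow> k \<in> {1..<N} \<and> ((k \<in> A \<and> Suc k \<notin> A) \<or> (k \<notin> A \<and> Suc k \<notin> A \<and> rk ({1..N} - A) k \<in> I)
       \<or> (k \<in> A \<and> Suc k \<in> A \<and> rk A k \<in> J))"
  unfolding Kset_def by simp

lemma wiD: "wi N h \<Longrightarrow> 1 \<le> s \<Longrightarrow> s \<le> t \<Longrightarrow> t \<le> N \<Longrightarrow> h s \<le> h t"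
  unfolding wi_def by blast

lemma GA_gapX:
  assumes AN: "A \<subseteq> {1..N}" and h: "wi N h" and st: "\<forall>k\<in>Kset N A I J. h k < h (Suc k)"
    and kI: "k \<in> I" and k1: "1 \<le> k" and kc: "Suc k \<le> card ({1..N} - A)"
  shows "h (en ({1..N} - A) k) < h (en ({1..N} - A) (Suc k))"
proof -
  let ?X = "{1..N} - A"
  have finX: "finite ?X" by simp
  let ?s = "en ?X k" and ?t = "en ?X (Suc k)"
  have s: "?s \<in> ?X" "rk ?X ?s = k" using en_props[OF finX, of k] k1 kc by auto
  have t: "?t \<in> ?X" using en_props[OF finX, of "Suc k"] kc by auto
  have slt: "?s < ?t" using en_strict[OF finX, of k "Suc k"] k1 kc by simp
  show ?thesis
  proof (cases "Suc ?s = ?t")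
    case True
    have "?s \<in> Kset N A I J" unfolding Kset_mem using s t True kI by auto
    then show ?thesis using st True by fastforce
  next
    case False
    then have lt: "Suc ?s < ?t" using slt by simp
    define p where "p = ?t - 1"
    have p: "Suc p = ?t" "?s < p" "p < ?t" using lt unfolding p_def by auto
    have "p \<notin> ?X" using en_between[OF finX k1 _ p(2)] p(3) kc by simp
    moreover have "p \<in> {1..N}" using p s t by auto
    ultimately have pA: "p \<in> A" by simp
    have "?t \<notin> A" using t by simp
    then have "p \<in> Kset N A I J" unfolding Kset_mem using pA p t by auto
    then have "h p < h ?t" using st p(1) by fastforce
    moreover have "h ?s \<le> h p" using wiD[OF h, of ?s p] s p t by auto
    ultimately show ?thesis by simp
  qed
qed

lemma GA_gapA:
  assumes AN: "A \<subseteq> {1..N}" and h: "wi N h" and st: "\<forall>k\<in>Kset N A I J. h k < h (Suc k)"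
    and kJ: "k \<in> J" and k1: "1 \<le> k" and kc: "Suc k \<le> card A"
  shows "h (en A k) < h (en A (Suc k))"
proof -
  have finA: "finite A" using AN finite_subset by blast
  let ?s = "en A k" and ?t = "en A (Suc k)"
  have s: "?s \<in> A" "rk A ?s = k" using en_props[OF finA, of k] k1 kc by auto
  have t: "?t \<in> A" using en_props[OF finA, of "Suc k"] kc by auto
  have slt: "?s < ?t" using en_strict[OF finA, of k "Suc k"] k1 kc by simp
  have sN: "?s \<in> {1..<N}" using s t slt AN by fastforce
  show ?thesis
  proof (cases "Suc ?s = ?t")
    case True
    have "?s \<in> Kset N A I J" unfolding Kset_mem using s t True sN kJ by auto
    then show ?thesis using st True by fastforce
  next
    case False
    then have lt: "Suc ?s < ?t" using slt by simp
    have "Suc ?s \<notin> A" using en_between[OF finA k1 _ _ lt] kc by simp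
    then have "?s \<in> Kset N A I J" unfolding Kset_mem using s sN by auto
    then have "h ?s < h (Suc ?s)" using st by blast
    moreover have "h (Suc ?s) \<le> h ?t" using wiD[OF h, of "Suc ?s" ?t] lt t AN by auto
    ultimately show ?thesis by simp
  qed
qed

lemma GA_final:
  assumes AN: "A \<subseteq> {1..N}" and h: "wi N h" and st: "\<forall>k\<in>Kset N A I J. h k < h (Suc k)"
    and sA: "s \<in> A"
  shows "s \<le> t \<Longrightarrow> t \<le> N \<Longrightarrow> h s = h t \<Longrightarrow> t \<in> A"
proof (induction t)
  case 0
  then show ?case using sA AN by auto
next
  case (Suc t)
  show ?case
  proof (cases "s = Suc t")
    case True then show ?thesis using sA by simp
  next
    case False
    then have stt: "s \<le> t" using Suc.prems by simp
    have s1: "1 \<le> s" using sA AN by auto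
    have "h s \<le> h t" using wiD[OF h s1 stt] Suc.prems by simp
    moreover have "h t \<le> h (Suc t)" using wiD[OF h, of t "Suc t"] s1 stt Suc.prems by simp
    ultimately have ht: "h t = h s" using Suc.prems by simp
    then have tA: "t \<in> A" using Suc.IH stt Suc.prems by simp
    show ?thesis
    proof (rule ccontr)
      assume "Suc t \<notin> A"
      then have "t \<in> Kset N A I J" unfolding Kset_mem using tA s1 stt Suc.prems by auto
      then have "h t < h (Suc t)" using st by blast
      then show False using ht Suc.prems by simp
    qed
  qed
qed

definition Phi :: "nat \<Rightarrow> (nat \<Rightarrow> nat) \<Rightarrow> nat set \<Rightarrow> nat \<Rightarrow> nat" where
  "Phi N h A = (\<lambda>i. card {s\<in>{1..N} - A. h s = i})"

lemma Phi_inj: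
  assumes A: "A \<subseteq> {1..N}" "\<forall>k\<in>Kset N A I J. h k < h (Suc k)"
    and A': "A' \<subseteq> {1..N}" "\<forall>k\<in>Kset N A' I J. h k < h (Suc k)"
    and h: "wi N h" and eq: "Phi N h A = Phi N h A'"
  shows "A \<subseteq> A'"
proof
  fix s assume sA: "s \<in> A"
  show "s \<in> A'"
  proof (rule ccontr)
    assume sA': "s \<notin> A'"
    define i where "i = h s"
    define R where "R = {t\<in>{1..N}. h t = i}"
    have finR: "finite R" unfolding R_def by simp
    have cardI: "card (R \<inter> B) = card R - Phi N h B i" if "B \<subseteq> {1..N}" for B
    proof -
      have "R - B = {s\<in>{1..N} - B. h s = i}" unfolding R_def by auto
      then have "card (R - B) = Phi N h B i" unfolding Phi_def by simp
      moreover have "R \<inter> B = R - (R - B)" by auto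
      moreover have "card (R - (R - B)) = card R - card (R - B)"
        using card_Diff_subset[of "R - B" R] finR by auto
      ultimately show ?thesis by simp
    qed
    have ceq: "card (R \<inter> A) = card (R \<inter> A')" using cardI[OF A(1)] cardI[OF A'(1)] eq by simp
    have s1: "s \<in> {1..N}" using sA A(1) by auto
    have sub1: "{t\<in>R. s \<le> t} \<subseteq> R \<inter> A"
    proof
      fix t assume t: "t \<in> {t\<in>R. s \<le> t}"
      then have "t \<in> A" using GA_final[OF A(1) h A(2) sA, of t] unfolding R_def i_def by auto
      then show "t \<in> R \<inter> A" using t by simp
    qed
    have sub2: "R \<inter> A' \<subseteq> {t\<in>R. s < t}"
    proof
      fix t assume t: "t \<in> R \<inter> A'"
      have "s < t"
      proof (rule ccontr)
        assume "\<not> s < t"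
        then have "t \<le> s" by simp
        moreover have "h t = h s" using t unfolding R_def i_def by simp
        ultimately have "s \<in> A'" using GA_final[OF A'(1) h A'(2), of t s] t s1 by auto
        then show False using sA' by simp
      qed
      then show "t \<in> {t\<in>R. s < t}" using t by simp
    qed
    have "{t\<in>R. s < t} \<subset> {t\<in>R. s \<le> t}"
    proof -
      have "s \<in> {t\<in>R. s \<le> t}" "s \<notin> {t\<in>R. s < t}" using s1 unfolding R_def i_def by auto
      then show ?thesis by auto
    qed
    then have "card {t\<in>R. s < t} < card {t\<in>R. s \<le> t}" using finR by (intro psubset_card_mono) auto
    moreover have "card (R \<inter> A') \<le> card {t\<in>R. s < t}" using sub2 finR by (intro card_mono) auto
    moreover have "card {t\<in>R. s \<le> t} \<le> card (R \<inter> A)" using sub1 finR by (intro card_mono) auto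
    ultimately show False using ceq by simp
  qed
qed

lemma bnd_mono: "bnd e B \<Longrightarrow> B \<le> B' \<Longrightarrow> bnd e B'"
  unfolding bnd_def by auto

lemma Phi_surj:
  assumes h: "wi N h" and he: "cnt N h = e" and N: "N = m + n"
    and L1: "LF m I e1" and L2: "LF n J (\<lambda>i. e i - e1 i)" and le: "\<forall>i. e1 i \<le> e i"
    and I: "I \<subseteq> {1..<m}" and J: "J \<subseteq> {1..<n}"
  shows "\<exists>A. A \<subseteq> {1..N} \<and> card A = n \<and> (\<forall>k\<in>Kset N A I J. h k < h (Suc k)) \<and> Phi N h A = e1"
proof -
  obtain f where f: "wi m f" "cnt m f = e1" "\<forall>k\<in>I. f k < f (Suc k)" using L1 unfolding LF_def by blast
  obtain g2 where g2: "wi n g2" "cnt n g2 = (\<lambda>i. e i - e1 i)" "\<forall>k\<in>J. g2 k < g2 (Suc k)"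
    using L2 unfolding LF_def by blast
  obtain B0 where B0: "bnd e B0" "Cb e B0 = N" using W7'[of N h] he by blast
  obtain B1 where B1: "bnd e1 B1" "Cb e1 B1 = m" using W7'[of m f] f(2) by blast
  define B where "B = max B0 B1"
  have CbB: "Cb e1 B = m" using Cb_bnd[OF B1(1), of B] B1(2) unfolding B_def by simp
  have CbN: "Cb e j \<le> N" for j using Cb_le_bnd[OF B0(1)] B0(2) by simp
  have run: "h s = i \<longleftrightarrow> Cb e i < s \<and> s \<le> Cb e (Suc i)" if "1 \<le> s" "s \<le> N" for s i
    using W4[OF h that] he by simp
  have hB: "h s < B" if "1 \<le> s" "s \<le> N" for s
  proof (rule ccontr)
    assume "\<not> h s < B"
    then have "B0 \<le> h s" unfolding B_def by simp
    then have "Cb e (h s) = N" "Cb e (Suc (h s)) = N" using Cb_bnd[OF B0(1)] B0(2) by auto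
    then show False using run[OF that, of "h s"] that by simp
  qed
  define A where "A = {s\<in>{1..N}. Cb e (h s) + e1 (h s) < s}"
  let ?X = "{1..N} - A"
  have AN: "A \<subseteq> {1..N}" unfolding A_def by auto
  have finA: "finite A" using AN finite_subset by blast
  have finX: "finite ?X" by simp
  have PhiA: "Phi N h A = e1"
  proof
    fix i
    have "{s\<in>?X. h s = i} = {Cb e i<..Cb e i + e1 i}"
    proof (rule set_eqI)
      fix s
      show "s \<in> {s\<in>?X. h s = i} \<longleftrightarrow> s \<in> {Cb e i<..Cb e i + e1 i}"
      proof
        assume "s \<in> {s\<in>?X. h s = i}"
        then have s: "1 \<le> s" "s \<le> N" "h s = i" "\<not> Cb e i + e1 i < s" unfolding A_def by auto
        then show "s \<in> {Cb e i<..Cb e i + e1 i}" using run[OF s(1,2), of i] by simp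
      next
        assume s: "s \<in> {Cb e i<..Cb e i + e1 i}"
        have "Cb e i + e1 i \<le> Cb e (Suc i)" using le by (simp add: Cb_Suc)
        then have s2: "1 \<le> s" "s \<le> N" "s \<le> Cb e (Suc i)" using s CbN[of "Suc i"] by auto
        then have "h s = i" using run[OF s2(1,2), of i] s by simp
        then show "s \<in> {s\<in>?X. h s = i}" using s s2 unfolding A_def by auto
      qed
    qed
    then show "Phi N h A i = e1 i" unfolding Phi_def by simp
  qed
  have cX: "card ?X = m"
  proof -
    have "?X = {s\<in>?X. h s < B}" using hB by auto
    then have "card ?X = (\<Sum>j<B. card {s\<in>?X. h s = j})" using W1gen[OF finX, of h B] by simp
    also have "\<dots> = (\<Sum>j<B. e1 j)" using PhiA unfolding Phi_def by (metis (no_types, lifting))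
    also have "\<dots> = m" using CbB unfolding Cb_def by simp
    finally show ?thesis .
  qed
  have cA: "card A = n"
  proof -
    have "card ?X = card {1..N} - card A" using card_Diff_subset[OF finA AN] .
    then show ?thesis using cX N AN card_mono[OF _ AN] by simp
  qed
  have wX: "wi m (\<lambda>k. h (en ?X k))" using proj_wi[OF finX _ h] cX by auto
  have cntX: "cnt m (\<lambda>k. h (en ?X k)) = e1" using proj_cnt[OF finX, of h] cX PhiA unfolding Phi_def by simp
  have wA: "wi n (\<lambda>k. h (en A k))" using proj_wi[OF finA AN h] cA by simp
  have cntA: "cnt n (\<lambda>k. h (en A k)) = (\<lambda>i. e i - e1 i)"
  proof
    fix i
    have "cnt n (\<lambda>k. h (en A k)) i = card {s\<in>A. h s = i}" using proj_cnt[OF finA, of h] cA by simp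
    also have "{s\<in>A. h s = i} = {s\<in>{1..N}. h s = i} - {s\<in>?X. h s = i}" using AN by auto
    also have "card \<dots> = card {s\<in>{1..N}. h s = i} - card {s\<in>?X. h s = i}"
      by (rule card_Diff_subset) auto
    also have "\<dots> = e i - e1 i" using he PhiA unfolding cnt_def Phi_def by metis
    finally show "cnt n (\<lambda>k. h (en A k)) i = e i - e1 i" .
  qed
  have stX: "h (en ?X j) = f j" if "1 \<le> j" "j \<le> m" for j
    using W5[OF wX f(1)] cntX f(2) that by simp
  have stA: "h (en A j) = g2 j" if "1 \<le> j" "j \<le> n" for j
    using W5[OF wA g2(1)] cntA g2(2) that by simp
  have strict: "\<forall>k\<in>Kset N A I J. h k < h (Suc k)"
  proof
    fix k assume k: "k \<in> Kset N A I J"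
    then have kN: "k \<in> {1..<N}" unfolding Kset_mem by simp
    have wk: "h k \<le> h (Suc k)" using wiD[OF h, of k "Suc k"] kN by auto
    consider (c1) "k \<in> A" "Suc k \<notin> A" | (c2) "k \<notin> A" "Suc k \<notin> A" "rk ?X k \<in> I"
      | (c3) "k \<in> A" "Suc k \<in> A" "rk A k \<in> J" using k unfolding Kset_mem by blast
    then show "h k < h (Suc k)"
    proof cases
      case c1
      show ?thesis
      proof (rule ccontr)
        assume "\<not> h k < h (Suc k)"
        then have eqk: "h (Suc k) = h k" using wk by simp
        have "Cb e (h k) + e1 (h k) < k" using c1(1) unfolding A_def by simp
        moreover have "\<not> Cb e (h k) + e1 (h k) < Suc k" using c1(2) kN eqk unfolding A_def by auto
        ultimately show False by simp
      qed
    next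
      case c2
      let ?r = "rk ?X k"
      have kX: "k \<in> ?X" "Suc k \<in> ?X" using c2 kN by auto
      have r: "1 \<le> ?r" "?r < m" using c2(3) I by (auto dest: subD)
      have e1': "en ?X ?r = k" using en_rk[OF finX kX(1)] .
      have e2': "en ?X (Suc ?r) = Suc k" using en_Suc_if_next[OF finX kX] .
      have "f ?r < f (Suc ?r)" using f(3) c2(3) by blast
      moreover have "h (en ?X ?r) = f ?r" using stX r by simp
      moreover have "h (en ?X (Suc ?r)) = f (Suc ?r)" using stX r by simp
      ultimately show ?thesis using e1' e2' by simp
    next
      case c3
      let ?r = "rk A k"
      have r: "1 \<le> ?r" "?r < n" using c3(3) J by (auto dest: subD)
      have e1': "en A ?r = k" using en_rk[OF finA c3(1)] .
      have e2': "en A (Suc ?r) = Suc k" using en_Suc_if_next[OF finA c3(1,2)] .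
      have "g2 ?r < g2 (Suc ?r)" using g2(3) c3(3) by blast
      moreover have "h (en A ?r) = g2 ?r" using stA r by simp
      moreover have "h (en A (Suc ?r)) = g2 (Suc ?r)" using stA r by simp
      ultimately show ?thesis using e1' e2' by simp
    qed
  qed
  show ?thesis using AN cA strict PhiA by blast
qed

lemma Kset_sub: "Kset N A I J \<subseteq> {1..<N}" unfolding Kset_def by auto

lemma cnt_le: "cnt N h i \<le> N"
proof -
  have "card {s\<in>{1..N}. h s = i} \<le> card {1..N}" by (rule card_mono) auto
  then show ?thesis unfolding cnt_def by simp
qed

lemma Phi_fwd:
  assumes h: "wi N h" and he: "cnt N h = e" and N: "N = m + n"
    and A: "A \<subseteq> {1..N}" "card A = n" and st: "\<forall>k\<in>Kset N A I J. h k < h (Suc k)"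
    and I: "I \<subseteq> {1..<m}" and J: "J \<subseteq> {1..<n}"
  shows "LF m I (Phi N h A) \<and> LF n J (\<lambda>i. e i - Phi N h A i) \<and> (\<forall>i. Phi N h A i \<le> e i)"
proof -
  let ?X = "{1..N} - A"
  have finA: "finite A" using A finite_subset by blast
  have finX: "finite ?X" by simp
  have cX: "card ?X = m" using card_Diff_subset[OF finA A(1)] A N by simp
  have wX: "wi m (\<lambda>k. h (en ?X k))" using proj_wi[OF finX _ h] cX by auto
  have cntX: "cnt m (\<lambda>k. h (en ?X k)) = Phi N h A" using proj_cnt[OF finX, of h] cX unfolding Phi_def by simp
  have wA: "wi n (\<lambda>k. h (en A k))" using proj_wi[OF finA A(1) h] A(2) by simp
  have leq: "Phi N h A i \<le> e i" for i
  proof -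
    have "card {s\<in>{1..N} - A. h s = i} \<le> card {s\<in>{1..N}. h s = i}" by (rule card_mono) auto
    then show ?thesis unfolding Phi_def using he[symmetric] unfolding cnt_def by simp
  qed
  have cntA: "cnt n (\<lambda>k. h (en A k)) = (\<lambda>i. e i - Phi N h A i)"
  proof
    fix i
    have "cnt n (\<lambda>k. h (en A k)) i = card {s\<in>A. h s = i}" using proj_cnt[OF finA, of h] A(2) by simp
    also have "{s\<in>A. h s = i} = {s\<in>{1..N}. h s = i} - {s\<in>?X. h s = i}" using A(1) by auto
    also have "card \<dots> = card {s\<in>{1..N}. h s = i} - card {s\<in>?X. h s = i}"
      by (rule card_Diff_subset) auto
    also have "\<dots> = e i - Phi N h A i"
    proof -
      have "e i = card {s\<in>{1..N}. h s = i}" using he[symmetric] by (simp add: cnt_def)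
      moreover have "Phi N h A i = card {s\<in>?X. h s = i}" by (simp add: Phi_def)
      ultimately show ?thesis by simp
    qed
    finally show "cnt n (\<lambda>k. h (en A k)) i = e i - Phi N h A i" .
  qed
  have sX: "\<forall>k\<in>I. h (en ?X k) < h (en ?X (Suc k))"
  proof
    fix k assume k: "k \<in> I"
    then have "1 \<le> k" "Suc k \<le> m" using subD[OF I k] by auto
    then show "h (en ?X k) < h (en ?X (Suc k))" using GA_gapX[OF A(1) h st k] cX by simp
  qed
  have sA: "\<forall>k\<in>J. h (en A k) < h (en A (Suc k))"
  proof
    fix k assume k: "k \<in> J"
    then have "1 \<le> k" "Suc k \<le> n" using subD[OF J k] by auto
    then show "h (en A k) < h (en A (Suc k))" using GA_gapA[OF A(1) h st k] A(2) by simp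
  qed
  have "LF m I (Phi N h A)" unfolding LF_def using wX cntX sX by blast
  moreover have "LF n J (\<lambda>i. e i - Phi N h A i)" unfolding LF_def using wA cntA sA by blast
  ultimately show ?thesis using leq by blast
qed

lemma shuffle:
  assumes I: "I \<subseteq> {1..<m}" and J: "J \<subseteq> {1..<n}"
  shows "(\<Sum>A\<in>{A. A \<subseteq> {1..m + n} \<and> card A = n}. Lfun (m + n) (Kset (m + n) A I J) e)
         = qmult (Lfun m I) (Lfun n J) e"
proof -
  define N where "N = m + n"
  define AS where "AS = {A. A \<subseteq> {1..N} \<and> card A = n}"
  define E where "E = {e1. \<forall>i. e1 i \<le> e i}"
  have finAS: "finite AS" unfolding AS_def by (rule finite_subset[of _ "Pow {1..N}"]) auto
  have LHS: "(\<Sum>A\<in>AS. Lfun N (Kset N A I J) e) = (\<Sum>A\<in>AS. if LF N (Kset N A I J) e then 1 else 0)"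
    by (rule sum.cong[OF refl]) (simp add: LL_F[OF Kset_sub])
  have RHS: "qmult (Lfun m I) (Lfun n J) e
      = (\<Sum>e1\<in>E. if LF m I e1 \<and> LF n J (\<lambda>i. e i - e1 i) then 1 else 0)"
    unfolding qmult_def E_def by (rule sum.cong[OF refl]) (simp add: LL_F[OF I] LL_F[OF J])
  show ?thesis
  proof (cases "\<exists>h. wi N h \<and> cnt N h = e")
    case False
    have l0: "(\<Sum>A\<in>AS. if LF N (Kset N A I J) e then 1 else 0) = (0::complex)"
    proof (rule sum.neutral, rule ballI)
      fix A assume "A \<in> AS"
      have "\<not> LF N (Kset N A I J) e" using False unfolding LF_def by blast
      then show "(if LF N (Kset N A I J) e then 1 else 0) = (0::complex)" by simp
    qed
    have r0: "(\<Sum>e1\<in>E. if LF m I e1 \<and> LF n J (\<lambda>i. e i - e1 i) then 1 else 0) = (0::complex)"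
    proof (rule sum.neutral, rule ballI)
      fix e1 assume e1: "e1 \<in> E"
      show "(if LF m I e1 \<and> LF n J (\<lambda>i. e i - e1 i) then 1 else 0) = (0::complex)"
      proof (rule ccontr)
        assume "(if LF m I e1 \<and> LF n J (\<lambda>i. e i - e1 i) then 1 else 0) \<noteq> (0::complex)"
        then have L: "LF m I e1" "LF n J (\<lambda>i. e i - e1 i)"
          by (cases "LF m I e1 \<and> LF n J (\<lambda>i. e i - e1 i)"; simp)+
        obtain f where f: "wi m f" "cnt m f = e1" using L(1) unfolding LF_def by blast
        obtain g2 where g2: "wi n g2" "cnt n g2 = (\<lambda>i. e i - e1 i)" using L(2) unfolding LF_def by blast
        obtain B1 where B1: "bnd e1 B1" "Cb e1 B1 = m" using W7'[of m f, unfolded f(2)] by blast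
        obtain B2 where B2: "bnd (\<lambda>i. e i - e1 i) B2" "Cb (\<lambda>i. e i - e1 i) B2 = n"
          using W7'[of n g2, unfolded g2(2)] by blast
        define B where "B = max B1 B2"
        have le1: "\<forall>i. e1 i \<le> e i" using e1 unfolding E_def by simp
        have ee: "(\<lambda>i. e1 i + (e i - e1 i)) = e"
        proof
          fix i show "e1 i + (e i - e1 i) = e i" using le1 by (simp add: le_add_diff_inverse)
        qed
        have b1: "bnd e1 B" "bnd (\<lambda>i. e i - e1 i) B"
          using bnd_mono[OF B1(1), of B] bnd_mono[OF B2(1), of B] unfolding B_def by auto
        have bB: "bnd e B" unfolding bnd_def
        proof (intro allI impI)
          fix j assume "B \<le> j"
          then have "e1 j = 0" "e j - e1 j = 0" using b1 unfolding bnd_def by auto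
          then show "e j = 0" by simp
        qed
        have cB: "Cb e B = N"
        proof -
          have "Cb e B = Cb (\<lambda>i. e1 i + (e i - e1 i)) B" using ee by simp
          also have "\<dots> = Cb e1 B + Cb (\<lambda>i. e i - e1 i) B" by (rule Cb_add)
          also have "\<dots> = m + n" using Cb_bnd[OF B1(1), of B] Cb_bnd[OF B2(1), of B] B1(2) B2(2)
            unfolding B_def by simp
          finally show ?thesis unfolding N_def .
        qed
        show False using W8[OF bB cB] False by blast
      qed
    qed
    show ?thesis using LHS RHS l0 r0 unfolding N_def AS_def by simp
  next
    case True
    then obtain h where h: "wi N h" "cnt N h = e" by blast
    define GA where "GA = {A\<in>AS. \<forall>k\<in>Kset N A I J. h k < h (Suc k)}"
    define GE where "GE = {e1\<in>E. LF m I e1 \<and> LF n J (\<lambda>i. e i - e1 i)}"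
    obtain B0 where B0: "bnd e B0" "Cb e B0 = N" using W7'[of N h, unfolded h(2)] by blast
    have finE: "finite E"
    proof (rule finite_subset)
      show "E \<subseteq> {f. \<forall>x. (x \<in> {..<B0} \<longrightarrow> f x \<in> {..N}) \<and> (x \<notin> {..<B0} \<longrightarrow> f x = 0)}"
      proof
        fix e1 assume "e1 \<in> E"
        then have le: "\<forall>i. e1 i \<le> e i" unfolding E_def by simp
        have "e1 x \<le> N" for x using le[rule_format, of x] cnt_le[of N h x] h(2) by simp
        moreover have "e1 x = 0" if "x \<notin> {..<B0}" for x
          using le[rule_format, of x] B0(1) that unfolding bnd_def by simp
        ultimately show "e1 \<in> {f. \<forall>x. (x \<in> {..<B0} \<longrightarrow> f x \<in> {..N}) \<and> (x \<notin> {..<B0} \<longrightarrow> f x = 0)}"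
          by auto
      qed
      show "finite {f. \<forall>x. (x \<in> {..<B0} \<longrightarrow> f x \<in> {..N}) \<and> (x \<notin> {..<B0} \<longrightarrow> f x = (0::nat))}"
        by (rule finite_set_of_finite_funs) auto
    qed
    have l1: "(\<Sum>A\<in>AS. if LF N (Kset N A I J) e then 1 else 0) = (of_nat (card GA) :: complex)"
    proof -
      have "(\<Sum>A\<in>AS. if LF N (Kset N A I J) e then 1 else 0)
          = (\<Sum>A\<in>AS. if (\<forall>k\<in>Kset N A I J. h k < h (Suc k)) then 1 else (0::complex))"
        by (rule sum.cong[OF refl]) (simp add: LF_h[OF h Kset_sub])
      also have "\<dots> = of_nat (card GA)" unfolding GA_def by (rule sum_ind_card[OF finAS])
      finally show ?thesis .
    qed
    have r1: "(\<Sum>e1\<in>E. if LF m I e1 \<and> LF n J (\<lambda>i. e i - e1 i) then 1 else 0) = (of_nat (card GE) :: complex)"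
      unfolding GE_def by (rule sum_ind_card[OF finE])
    have bij: "bij_betw (Phi N h) GA GE"
    proof (rule bij_betw_imageI)
      show "inj_on (Phi N h) GA"
      proof (rule inj_onI)
        fix A A' assume "A \<in> GA" "A' \<in> GA" "Phi N h A = Phi N h A'"
        then show "A = A'" using Phi_inj[of A N I J h A'] Phi_inj[of A' N I J h A] h(1)
          unfolding GA_def AS_def by auto
      qed
      show "Phi N h ` GA = GE"
      proof
        show "Phi N h ` GA \<subseteq> GE"
        proof
          fix x assume "x \<in> Phi N h ` GA"
          then obtain A where A: "A \<in> GA" "x = Phi N h A" by auto
          then have "A \<subseteq> {1..N}" "card A = n" "\<forall>k\<in>Kset N A I J. h k < h (Suc k)"
            unfolding GA_def AS_def by auto
          then show "x \<in> GE" using Phi_fwd[OF h(1) h(2) N_def _ _ _ I J] A unfolding GE_def E_def by auto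
        qed
        show "GE \<subseteq> Phi N h ` GA"
        proof
          fix e1 assume "e1 \<in> GE"
          then have "LF m I e1" "LF n J (\<lambda>i. e i - e1 i)" "\<forall>i. e1 i \<le> e i" unfolding GE_def E_def by auto
          then obtain A where A: "A \<subseteq> {1..N}" "card A = n" "\<forall>k\<in>Kset N A I J. h k < h (Suc k)" "Phi N h A = e1"
            using Phi_surj[OF h(1) h(2) N_def _ _ _ I J] by metis
          then have "A \<in> GA" unfolding GA_def AS_def by auto
          then show "e1 \<in> Phi N h ` GA" using A(4) by (metis image_eqI)
        qed
      qed
    qed
    have "card GA = card GE" using bij_betw_same_card[OF bij] .
    then show ?thesis using LHS RHS l1 r1 unfolding N_def AS_def by simp
  qed
qed

lemma group_sum:
  fixes F :: "'b \<Rightarrow> complex"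
  assumes "finite S" "finite T" "f ` S \<subseteq> T"
  shows "(\<Sum>x\<in>S. F (f x)) = (\<Sum>y\<in>T. of_nat (card {x\<in>S. f x = y}) * F y)"
proof -
  have "(\<Sum>x\<in>S. F (f x)) = (\<Sum>y\<in>T. \<Sum>x\<in>{x\<in>S. f x = y}. F (f x))"
    using sum.group[OF assms, of "\<lambda>x. F (f x)"] by simp
  also have "\<dots> = (\<Sum>y\<in>T. of_nat (card {x\<in>S. f x = y}) * F y)"
  proof (rule sum.cong[OF refl])
    fix y assume "y \<in> T"
    have "(\<Sum>x\<in>{x\<in>S. f x = y}. F (f x)) = (\<Sum>x\<in>{x\<in>S. f x = y}. F y)" by (rule sum.cong) auto
    also have "\<dots> = of_nat (card {x\<in>S. f x = y}) * F y" by simp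
    finally show "(\<Sum>x\<in>{x\<in>S. f x = y}. F (f x)) = of_nat (card {x\<in>S. f x = y}) * F y" .
  qed
  finally show ?thesis .
qed

lemma chi_0[simp]: "chi \<nu> 0 I g = 1" unfolding chi_def by simp

lemma rk_interval: "s \<le> N \<Longrightarrow> rk {1..N} s = s"
proof -
  assume "s \<le> N"
  then have "{t\<in>{1..N}. t \<le> s} = {1..s}" by auto
  then show ?thesis unfolding rk_def by simp
qed

lemma mA_chi_all:
  assumes A: "A \<subseteq> {1..m+n}" "card A = n" and I: "I \<subseteq> {1..<m}" and J: "J \<subseteq> {1..<n}"
  shows "mA \<nu> m n A (chi \<nu> m I) (chi \<nu> n J) g = chi \<nu> (m+n) (Kset (m+n) A I J) g"
proof (cases "m = 0")
  case True
  have finA: "finite A" using A(1) finite_subset by blast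
  have "A = {1..n}" using card_subset_eq[of "{1..n}" A] A True by simp
  moreover have "Kset n {1..n} I J = J"
  proof (rule set_eqI)
    fix s
    show "s \<in> Kset n {1..n} I J \<longleftrightarrow> s \<in> J"
    proof
      assume "s \<in> Kset n {1..n} I J"
      then have "s \<in> {1..<n}" "rk {1..n} s \<in> J" unfolding Kset_mem by auto
      then show "s \<in> J" using rk_interval[of s n] by simp
    next
      assume s: "s \<in> J"
      then have "s \<in> {1..<n}" using subD[OF J s] by simp
      then show "s \<in> Kset n {1..n} I J" unfolding Kset_mem using rk_interval[of s n] s by auto
    qed
  qed
  moreover have "chi \<nu> 0 I (\<lambda>_. 0) = 1" unfolding chi_def by simp
  ultimately show ?thesis unfolding mA_def using True by simp
next
  case m: False
  show ?thesis
  proof (cases "n = 0")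
    case True
    have "A = {}" using A True by (metis card_0_eq finite_atLeastAtMost finite_subset)
    moreover have "Kset m {} I J = I"
    proof (rule set_eqI)
      fix s
      show "s \<in> Kset m {} I J \<longleftrightarrow> s \<in> I"
      proof
        assume "s \<in> Kset m {} I J"
        then have "s \<in> {1..<m}" "rk {1..m} s \<in> I" unfolding Kset_mem by auto
        then show "s \<in> I" using rk_interval[of s m] by simp
      next
        assume s: "s \<in> I"
        then have "s \<in> {1..<m}" using subD[OF I s] by simp
        then show "s \<in> Kset m {} I J" unfolding Kset_mem using rk_interval[of s m] s by auto
      qed
    qed
    moreover have "chi \<nu> 0 J (\<lambda>_. 0) = 1" unfolding chi_def by simp
    ultimately show ?thesis unfolding mA_def using True m by simp
  next
    case False
    then show ?thesis using mA_chi[of m n A \<nu> I J g] m A by simp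
  qed
qed

lemma partA:
  assumes nu: "1 < \<nu>" and I: "I \<subseteq> {1..<m}" and J: "J \<subseteq> {1..<n}"
  shows "ch \<nu> (m + n) (mprod \<nu> m n (chi \<nu> m I) (chi \<nu> n J)) = qmult (Lfun m I) (Lfun n J)"
proof -
  define N where "N = m + n"
  define AS where "AS = {A. A \<subseteq> {1..N} \<and> card A = n}"
  have finAS: "finite AS" unfolding AS_def by (rule finite_subset[of _ "Pow {1..N}"]) auto
  have img: "(\<lambda>A. Kset N A I J) ` AS \<subseteq> Pow {1..<N}" using Kset_sub by blast
  define c where "c K = (of_nat (card {A\<in>AS. Kset N A I J = K}) :: complex)" for K
  have rep: "\<forall>g\<in>Qn \<nu> N. mprod \<nu> m n (chi \<nu> m I) (chi \<nu> n J) g = (\<Sum>K\<in>Pow {1..<N}. c K * chi \<nu> N K g)"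
  proof
    fix g assume "g \<in> Qn \<nu> N"
    have "mprod \<nu> m n (chi \<nu> m I) (chi \<nu> n J) g = (\<Sum>A\<in>AS. chi \<nu> N (Kset N A I J) g)"
      unfolding mprod_def AS_def N_def
      by (rule sum.cong[OF refl]) (use mA_chi_all I J in auto)
    also have "\<dots> = (\<Sum>K\<in>Pow {1..<N}. c K * chi \<nu> N K g)"
      unfolding c_def by (rule group_sum[OF finAS _ img]) simp
    finally show "mprod \<nu> m n (chi \<nu> m I) (chi \<nu> n J) g = (\<Sum>K\<in>Pow {1..<N}. c K * chi \<nu> N K g)" .
  qed
  have "ch \<nu> N (mprod \<nu> m n (chi \<nu> m I) (chi \<nu> n J)) = (\<lambda>e. \<Sum>K\<in>Pow {1..<N}. c K * Lfun N K e)"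
    by (rule ch_eq[OF nu rep])
  also have "\<dots> = (\<lambda>e. \<Sum>A\<in>AS. Lfun N (Kset N A I J) e)"
  proof
    fix e
    show "(\<Sum>K\<in>Pow {1..<N}. c K * Lfun N K e) = (\<Sum>A\<in>AS. Lfun N (Kset N A I J) e)"
      unfolding c_def by (rule group_sum[OF finAS _ img, symmetric]) simp
  qed
  also have "\<dots> = qmult (Lfun m I) (Lfun n J)"
  proof
    fix e show "(\<Sum>A\<in>AS. Lfun N (Kset N A I J) e) = qmult (Lfun m I) (Lfun n J) e"
      using shuffle[OF I J, of e] unfolding AS_def N_def by simp
  qed
  finally show ?thesis unfolding N_def .
qed

definition I1 :: "nat set \<Rightarrow> nat \<Rightarrow> nat set" where "I1 I k = {s\<in>I. s < k}"
definition I2 :: "nat set \<Rightarrow> nat \<Rightarrow> nat set" where "I2 I k = (\<lambda>s. s - k) ` {s\<in>I. k < s}"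

lemma I1_sub: "I \<subseteq> {1..<n} \<Longrightarrow> I1 I k \<subseteq> {1..<k}"
  unfolding I1_def by (auto dest: subD)

lemma I2_sub: "I \<subseteq> {1..<n} \<Longrightarrow> I2 I k \<subseteq> {1..<n - k}"
proof
  fix x assume I: "I \<subseteq> {1..<n}" and "x \<in> I2 I k"
  then obtain s where s: "s \<in> I" "k < s" "x = s - k" unfolding I2_def by auto
  then have "s < n" using subD[OF I s(1)] by simp
  then show "x \<in> {1..<n - k}" using s by auto
qed

lemma I2_mem: "1 \<le> j \<Longrightarrow> j \<in> I2 I k \<longleftrightarrow> j + k \<in> I"
  unfolding I2_def by (auto simp: image_iff intro: bexI[of _ "j + k"])

lemma cop_chi:
  assumes k: "k \<le> n" and I: "I \<subseteq> {1..<n}"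
  shows "cop n k (chi \<nu> n I) a b = chi \<nu> k (I1 I k) a * chi \<nu> (n - k) (I2 I k) b"
proof -
  consider (z) "k = 0" | (f) "k \<noteq> 0" "k = n" | (m) "0 < k" "k < n" using k by linarith
  then show ?thesis
  proof cases
    case z
    have "I2 I 0 = I" unfolding I2_def using subD[OF I] by force
    then show ?thesis using z unfolding cop_def by simp
  next
    case f
    have "I1 I n = I" unfolding I1_def using subD[OF I] by force
    then show ?thesis using f unfolding cop_def by simp
  next
    case m
    define c where "c = (\<lambda>i. if i < k then a i else if i = k then 0 else b (i - k))"
    have cop: "cop n k (chi \<nu> n I) a b = chi \<nu> n I c" unfolding cop_def c_def using m by simp
    define S1 where "S1 = {1..<k} - I"
    define S2 where "S2 = {k} - I"
    define S3 where "S3 = {k<..<n} - I"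
    have dec: "{1..<n} - I = S1 \<union> S2 \<union> S3" unfolding S1_def S2_def S3_def using m by auto
    have d1: "S1 \<inter> S2 = {}" "(S1 \<union> S2) \<inter> S3 = {}" unfolding S1_def S2_def S3_def by auto
    have fin: "finite S1" "finite S2" "finite S3" unfolding S1_def S2_def S3_def by auto
    have "chi \<nu> n I c = (\<Prod>i\<in>S1 \<union> S2 \<union> S3. psi \<nu> (c i))" unfolding chi_def dec ..
    also have "\<dots> = (\<Prod>i\<in>S1. psi \<nu> (c i)) * (\<Prod>i\<in>S2. psi \<nu> (c i)) * (\<Prod>i\<in>S3. psi \<nu> (c i))"
      using prod.union_disjoint[OF finite_UnI[OF fin(1,2)] fin(3) d1(2), of "\<lambda>i. psi \<nu> (c i)"]
        prod.union_disjoint[OF fin(1,2) d1(1), of "\<lambda>i. psi \<nu> (c i)"] by simp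
    also have "(\<Prod>i\<in>S1. psi \<nu> (c i)) = chi \<nu> k (I1 I k) a"
    proof -
      have "{1..<k} - I1 I k = S1" unfolding S1_def I1_def by auto
      then show ?thesis unfolding chi_def by (intro prod.cong) (auto simp: c_def S1_def)
    qed
    also have "(\<Prod>i\<in>S2. psi \<nu> (c i)) = 1"
      by (rule prod.neutral) (auto simp: S2_def c_def psi_def)
    also have "(\<Prod>i\<in>S3. psi \<nu> (c i)) = chi \<nu> (n - k) (I2 I k) b"
    proof -
      have img: "S3 = (\<lambda>j. j + k) ` ({1..<n - k} - I2 I k)"
      proof (rule set_eqI)
        fix x
        show "x \<in> S3 \<longleftrightarrow> x \<in> (\<lambda>j. j + k) ` ({1..<n - k} - I2 I k)"
        proof
          assume x: "x \<in> S3"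
          then have x1: "k < x" "x < n" "x \<notin> I" unfolding S3_def by auto
          then have "1 \<le> x - k" by simp
          then have "x - k \<notin> I2 I k" using I2_mem[of "x - k" I k] x1 by simp
          then have "x - k \<in> {1..<n - k} - I2 I k" "x = (x - k) + k" using x1 by auto
          then show "x \<in> (\<lambda>j. j + k) ` ({1..<n - k} - I2 I k)" by (metis image_eqI)
        next
          assume "x \<in> (\<lambda>j. j + k) ` ({1..<n - k} - I2 I k)"
          then obtain j where j: "j \<in> {1..<n - k}" "j \<notin> I2 I k" "x = j + k" by auto
          then show "x \<in> S3" using I2_mem[of j I k] unfolding S3_def by auto
        qed
      qed
      have "(\<Prod>i\<in>S3. psi \<nu> (c i)) = (\<Prod>j\<in>{1..<n - k} - I2 I k. psi \<nu> (c (j + k)))"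
        unfolding img by (subst prod.reindex) (auto simp: inj_on_def)
      also have "\<dots> = chi \<nu> (n - k) (I2 I k) b" unfolding chi_def by (intro prod.cong) (auto simp: c_def)
      finally show ?thesis .
    qed
    finally show ?thesis using cop by simp
  qed
qed

lemma ch2_cop:
  assumes nu: "1 < \<nu>" and k: "k \<le> n" and I: "I \<subseteq> {1..<n}"
  shows "ch2 \<nu> k (n - k) (cop n k (chi \<nu> n I)) = (\<lambda>p. tens (Lfun k (I1 I k)) (Lfun (n - k) (I2 I k)) p)"
proof -
  define c where "c I' J' = (if I' = I1 I k \<and> J' = I2 I k then 1 else (0::complex))" for I' J'
  have P1: "I1 I k \<in> Pow {1..<k}" using I1_sub[OF I] by simp
  have P2: "I2 I k \<in> Pow {1..<n - k}" using I2_sub[OF I] by simp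
  have coll: "(\<Sum>I'\<in>Pow {1..<k}. \<Sum>J'\<in>Pow {1..<n - k}. c I' J' * X I' J') = X (I1 I k) (I2 I k)" for X
  proof -
    have "(\<Sum>I'\<in>Pow {1..<k}. \<Sum>J'\<in>Pow {1..<n - k}. c I' J' * X I' J')
        = (\<Sum>I'\<in>Pow {1..<k}. if I' = I1 I k then X I' (I2 I k) else 0)"
    proof (rule sum.cong[OF refl])
      fix I' assume "I' \<in> Pow {1..<k}"
      have "(\<Sum>J'\<in>Pow {1..<n - k}. c I' J' * X I' J') = (\<Sum>J'\<in>Pow {1..<n - k}. if J' = I2 I k then (if I' = I1 I k then X I' J' else 0) else 0)"
        by (rule sum.cong) (auto simp: c_def)
      also have "\<dots> = (if I' = I1 I k then X I' (I2 I k) else 0)" using P2 by (simp add: sum.delta)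
      finally show "(\<Sum>J'\<in>Pow {1..<n - k}. c I' J' * X I' J') = (if I' = I1 I k then X I' (I2 I k) else 0)" .
    qed
    also have "\<dots> = X (I1 I k) (I2 I k)" using P1 by (simp add: sum.delta)
    finally show ?thesis .
  qed
  have rep: "\<forall>a\<in>Qn \<nu> k. \<forall>b\<in>Qn \<nu> (n - k). cop n k (chi \<nu> n I) a b =
      (\<Sum>I'\<in>Pow {1..<k}. \<Sum>J'\<in>Pow {1..<n - k}. c I' J' * (chi \<nu> k I' a * chi \<nu> (n - k) J' b))"
    using coll[of "\<lambda>I' J'. chi \<nu> k I' a * chi \<nu> (n - k) J' b" for a b] cop_chi[OF k I] by simp
  show ?thesis
    using ch2_eq[OF nu rep] coll[of "\<lambda>I' J'. tens (Lfun k I') (Lfun (n - k) J') p" for p] by simp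
qed

definition ee :: "nat list \<Rightarrow> nat \<Rightarrow> nat" where
  "ee \<alpha> = (\<lambda>i. if i < length \<alpha> then \<alpha> ! i else 0)"

lemma ee_props:
  assumes "is_comp \<alpha>"
  shows "finite (supp (ee \<alpha>)) \<and> nz (ee \<alpha>) = \<alpha>"
proof -
  have s: "supp (ee \<alpha>) = {0..<length \<alpha>}"
    using assms unfolding supp_def ee_def is_comp_def by (auto simp: nth_mem)
  have "nz (ee \<alpha>) = map (ee \<alpha>) [0..<length \<alpha>]" unfolding nz_def s by simp
  also have "\<dots> = map (\<lambda>i. \<alpha> ! i) [0..<length \<alpha>]" by (rule map_cong) (auto simp: ee_def)
  also have "\<dots> = \<alpha>" by (rule map_nth)
  finally show ?thesis using s by simp
qed

lemma M_ee: "is_comp \<alpha> \<Longrightarrow> is_comp \<beta> \<Longrightarrow> M \<beta> (ee \<alpha>) = (if \<beta> = \<alpha> then 1 else 0)"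
  using M_eq[of \<beta> "ee \<alpha>"] ee_props[of \<alpha>] by simp

lemma qcoprod_eq:
  assumes fin: "finite A0" and ic: "\<forall>\<alpha>\<in>A0. is_comp \<alpha>"
  shows "qcoprod (\<lambda>e. \<Sum>\<alpha>\<in>A0. c \<alpha> * M \<alpha> e) = (\<lambda>p. \<Sum>\<alpha>\<in>A0. c \<alpha> * coprodM \<alpha> p)"
  unfolding qcoprod_def
proof (rule the_equality)
  show "\<exists>A c'. finite A \<and> (\<forall>\<alpha>\<in>A. is_comp \<alpha>) \<and> (\<lambda>e. \<Sum>\<alpha>\<in>A0. c \<alpha> * M \<alpha> e) = (\<lambda>e. \<Sum>\<alpha>\<in>A. c' \<alpha> * M \<alpha> e)
      \<and> (\<lambda>p. \<Sum>\<alpha>\<in>A0. c \<alpha> * coprodM \<alpha> p) = (\<lambda>p. \<Sum>\<alpha>\<in>A. c' \<alpha> * coprodM \<alpha> p)"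
    using fin ic by blast
next
  fix t assume "\<exists>A c'. finite A \<and> (\<forall>\<alpha>\<in>A. is_comp \<alpha>) \<and> (\<lambda>e. \<Sum>\<alpha>\<in>A0. c \<alpha> * M \<alpha> e) = (\<lambda>e. \<Sum>\<alpha>\<in>A. c' \<alpha> * M \<alpha> e)
      \<and> t = (\<lambda>p. \<Sum>\<alpha>\<in>A. c' \<alpha> * coprodM \<alpha> p)"
  then obtain A1 c1 where A1: "finite A1" "\<forall>\<alpha>\<in>A1. is_comp \<alpha>"
    and feq: "(\<lambda>e. \<Sum>\<alpha>\<in>A0. c \<alpha> * M \<alpha> e) = (\<lambda>e. \<Sum>\<alpha>\<in>A1. c1 \<alpha> * M \<alpha> e)"
    and t: "t = (\<lambda>p. \<Sum>\<alpha>\<in>A1. c1 \<alpha> * coprodM \<alpha> p)" by blast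
  have ev: "(\<Sum>\<beta>\<in>B. d \<beta> * M \<beta> (ee \<alpha>)) = (if \<alpha> \<in> B then d \<alpha> else 0)"
    if "finite B" "\<forall>\<beta>\<in>B. is_comp \<beta>" "is_comp \<alpha>" for B d \<alpha>
  proof -
    have "(\<Sum>\<beta>\<in>B. d \<beta> * M \<beta> (ee \<alpha>)) = (\<Sum>\<beta>\<in>B. if \<beta> = \<alpha> then d \<beta> else 0)"
      by (rule sum.cong[OF refl]) (use that M_ee in auto)
    also have "\<dots> = (if \<alpha> \<in> B then d \<alpha> else 0)" using that(1) by (simp add: sum.delta)
    finally show ?thesis .
  qed
  define d where "d \<alpha> = (if \<alpha> \<in> A0 then c \<alpha> else 0)" for \<alpha>
  have dd: "d \<alpha> = (if \<alpha> \<in> A1 then c1 \<alpha> else 0)" if "\<alpha> \<in> A0 \<union> A1" for \<alpha>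
  proof -
    have ica: "is_comp \<alpha>" using that ic A1(2) by blast
    have "(\<Sum>\<beta>\<in>A0. c \<beta> * M \<beta> (ee \<alpha>)) = (\<Sum>\<beta>\<in>A1. c1 \<beta> * M \<beta> (ee \<alpha>))"
      using fun_cong[OF feq, of "ee \<alpha>"] by simp
    then show ?thesis unfolding d_def using ev[OF fin ic ica, of c] ev[OF A1(1) A1(2) ica, of c1] by simp
  qed
  have eqp: "(\<Sum>\<alpha>\<in>A0. c \<alpha> * coprodM \<alpha> p) = (\<Sum>\<alpha>\<in>A1. c1 \<alpha> * coprodM \<alpha> p)" for p
  proof -
    have "(\<Sum>\<alpha>\<in>A0. c \<alpha> * coprodM \<alpha> p) = (\<Sum>\<alpha>\<in>A0 \<union> A1. d \<alpha> * coprodM \<alpha> p)"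
      by (rule sum.mono_neutral_cong_left) (use fin A1(1) in \<open>auto simp: d_def\<close>)
    also have "\<dots> = (\<Sum>\<alpha>\<in>A1. c1 \<alpha> * coprodM \<alpha> p)"
      by (rule sum.mono_neutral_cong_right) (use fin A1(1) dd in auto)
    finally show ?thesis .
  qed
  show "t = (\<lambda>p. \<Sum>\<alpha>\<in>A0. c \<alpha> * coprodM \<alpha> p)" unfolding t using eqp by simp
qed

lemma LCb_char: "LCb k K e \<longleftrightarrow> finite (supp e) \<and> sum_list (nz e) = k \<and> K \<subseteq> psall (nz e)"
proof
  assume "LCb k K e"
  then obtain B where B: "bnd e B" "Cb e B = k" and K: "K \<subseteq> range (Cb e)" unfolding LCb_def by blast
  have f: "finite (supp e)" using B(1) fin_bnd by blast
  show "finite (supp e) \<and> sum_list (nz e) = k \<and> K \<subseteq> psall (nz e)"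
    using f Cb_bnd_nz[OF f B(1)] B(2) K range_Cb[OF f] by simp
next
  assume a: "finite (supp e) \<and> sum_list (nz e) = k \<and> K \<subseteq> psall (nz e)"
  then obtain B where B: "bnd e B" using fin_bnd by blast
  then have "Cb e B = k" using Cb_bnd_nz[OF _ B] a by simp
  then show "LCb k K e" unfolding LCb_def using B a range_Cb[of e] by auto
qed

lemma psall_append: "psall (\<beta> @ \<gamma>) = psall \<beta> \<union> (\<lambda>x. sum_list \<beta> + x) ` psall \<gamma>"
proof
  show "psall (\<beta> @ \<gamma>) \<subseteq> psall \<beta> \<union> (\<lambda>x. sum_list \<beta> + x) ` psall \<gamma>"
  proof
    fix x assume "x \<in> psall (\<beta> @ \<gamma>)"
    then obtain c where c: "c \<le> length (\<beta> @ \<gamma>)" "x = sum_list (take c (\<beta> @ \<gamma>))" unfolding psall_def by blast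
    show "x \<in> psall \<beta> \<union> (\<lambda>x. sum_list \<beta> + x) ` psall \<gamma>"
    proof (cases "c \<le> length \<beta>")
      case True
      then have "x = sum_list (take c \<beta>)" using c by simp
      then show ?thesis using True unfolding psall_def by blast
    next
      case False
      then have "x = sum_list \<beta> + sum_list (take (c - length \<beta>) \<gamma>)" using c by simp
      moreover have "c - length \<beta> \<le> length \<gamma>" using c by simp
      ultimately show ?thesis unfolding psall_def by blast
    qed
  qed
  show "psall \<beta> \<union> (\<lambda>x. sum_list \<beta> + x) ` psall \<gamma> \<subseteq> psall (\<beta> @ \<gamma>)"
  proof
    fix x assume "x \<in> psall \<beta> \<union> (\<lambda>x. sum_list \<beta> + x) ` psall \<gamma>"
    then show "x \<in> psall (\<beta> @ \<gamma>)"
    proof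
      assume "x \<in> psall \<beta>"
      then obtain c where c: "c \<le> length \<beta>" "x = sum_list (take c \<beta>)" unfolding psall_def by blast
      then have "x = sum_list (take c (\<beta> @ \<gamma>))" "c \<le> length (\<beta> @ \<gamma>)" by simp_all
      then show ?thesis unfolding psall_def by blast
    next
      assume "x \<in> (\<lambda>x. sum_list \<beta> + x) ` psall \<gamma>"
      then obtain c where c: "c \<le> length \<gamma>" "x = sum_list \<beta> + sum_list (take c \<gamma>)" unfolding psall_def by blast
      then have "x = sum_list (take (length \<beta> + c) (\<beta> @ \<gamma>))" "length \<beta> + c \<le> length (\<beta> @ \<gamma>)" by simp_all
      then show ?thesis unfolding psall_def by blast
    qed
  qed
qed

lemma psall_le: "x \<in> psall \<beta> \<Longrightarrow> x \<le> sum_list (\<beta>::nat list)"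
proof -
  assume "x \<in> psall \<beta>"
  then obtain c where c: "x = sum_list (take c \<beta>)" unfolding psall_def by blast
  have "sum_list \<beta> = sum_list (take c \<beta>) + sum_list (drop c \<beta>)"
    by (metis append_take_drop_id sum_list_append)
  then show ?thesis using c by simp
qed

lemma sum_in_psall: "sum_list \<beta> \<in> psall \<beta>"
  unfolding psall_def by (rule CollectI, rule exI[of _ "length \<beta>"]) simp

lemma split_psall:
  assumes t1: "t1 = sum_list (\<beta>1::nat list)"
  shows "I \<subseteq> psall \<beta>1 \<union> (\<lambda>x. t1 + x) ` psall \<beta>2 \<longleftrightarrow> I1 I t1 \<subseteq> psall \<beta>1 \<and> I2 I t1 \<subseteq> psall \<beta>2"
proof
  assume a: "I \<subseteq> psall \<beta>1 \<union> (\<lambda>x. t1 + x) ` psall \<beta>2"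
  have "I1 I t1 \<subseteq> psall \<beta>1"
  proof
    fix s assume "s \<in> I1 I t1"
    then have s: "s \<in> I" "s < t1" unfolding I1_def by auto
    then show "s \<in> psall \<beta>1" using a by auto
  qed
  moreover have "I2 I t1 \<subseteq> psall \<beta>2"
  proof
    fix j assume "j \<in> I2 I t1"
    then obtain s where s: "s \<in> I" "t1 < s" "j = s - t1" unfolding I2_def by auto
    have "s \<notin> psall \<beta>1" using psall_le[of s \<beta>1] s t1 by auto
    then obtain y where "y \<in> psall \<beta>2" "s = t1 + y" using a s(1) by auto
    then show "j \<in> psall \<beta>2" using s by simp
  qed
  ultimately show "I1 I t1 \<subseteq> psall \<beta>1 \<and> I2 I t1 \<subseteq> psall \<beta>2" by simp
next
  assume a: "I1 I t1 \<subseteq> psall \<beta>1 \<and> I2 I t1 \<subseteq> psall \<beta>2"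
  show "I \<subseteq> psall \<beta>1 \<union> (\<lambda>x. t1 + x) ` psall \<beta>2"
  proof
    fix s assume s: "s \<in> I"
    consider "s < t1" | "s = t1" | "t1 < s" by linarith
    then show "s \<in> psall \<beta>1 \<union> (\<lambda>x. t1 + x) ` psall \<beta>2"
    proof cases
      case 1 then have "s \<in> I1 I t1" using s unfolding I1_def by simp
      then show ?thesis using a by auto
    next
      case 2 then show ?thesis using sum_in_psall[of \<beta>1] t1 by simp
    next
      case 3 then have "s - t1 \<in> I2 I t1" using s unfolding I2_def by auto
      then have "s - t1 \<in> psall \<beta>2" using a by auto
      moreover have "s = t1 + (s - t1)" using 3 by simp
      ultimately show ?thesis by blast
    qed
  qed
qed

lemma comp_exists:
  assumes I: "I \<subseteq> {1..<n}" and b: "is_comp \<beta>"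
  shows "(\<exists>J. I \<subseteq> J \<and> J \<subseteq> {1..<n} \<and> comp n J = \<beta>) \<longleftrightarrow> (sum_list \<beta> = n \<and> I \<subseteq> psall \<beta>)"
proof (cases "n = 0")
  case True
  then have I0: "I = {}" using I by simp
  have "(\<exists>J. I \<subseteq> J \<and> J \<subseteq> {1..<n} \<and> comp n J = \<beta>) \<longleftrightarrow> \<beta> = []"
    using True I0 by (auto simp: comp_def)
  also have "\<dots> \<longleftrightarrow> sum_list \<beta> = n" using True sum_list_zero_comp[OF b] by auto
  finally show ?thesis using I0 by simp
next
  case False
  then have n: "0 < n" by simp
  show ?thesis
  proof
    assume "\<exists>J. I \<subseteq> J \<and> J \<subseteq> {1..<n} \<and> comp n J = \<beta>"
    then obtain J where J: "I \<subseteq> J" "J \<subseteq> {1..<n}" "comp n J = \<beta>" by blast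
    then show "sum_list \<beta> = n \<and> I \<subseteq> psall \<beta>" using C1[OF J(2) n] by auto
  next
    assume a: "sum_list \<beta> = n \<and> I \<subseteq> psall \<beta>"
    obtain J0 where J0: "J0 \<subseteq> {1..<n}" "comp n J0 = \<beta>" using C2[OF b _ n] a by blast
    have "psall \<beta> = insert 0 (insert n J0)" using C1[OF J0(1) n] J0(2) by simp
    then have "I \<subseteq> J0" using a subD[OF I] by force
    then show "\<exists>J. I \<subseteq> J \<and> J \<subseteq> {1..<n} \<and> comp n J = \<beta>" using J0 by blast
  qed
qed

lemma comp_unique:
  assumes "J \<subseteq> {1..<n}" "J' \<subseteq> {1..<n}" "comp n J = comp n J'"
  shows "J = J'"
proof (cases "n = 0")
  case True then show ?thesis using assms by simp
next
  case False
  then have n: "0 < n" by simp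
  have "insert 0 (insert n J) = insert 0 (insert n J')" using C1[OF assms(1) n] C1[OF assms(2) n] assms(3) by simp
  then show ?thesis using comp_inj_sets[OF assms(1,2)] by simp
qed

lemma is_comp_comp: "J \<subseteq> {1..<n} \<Longrightarrow> is_comp (comp n J)"
  using C1[of J n] by (cases "n = 0") (auto simp: comp_def is_comp_def)

lemma is_comp_take: "is_comp \<alpha> \<Longrightarrow> is_comp (take j \<alpha>)"
  unfolding is_comp_def by (meson in_set_takeD)
lemma is_comp_drop: "is_comp \<alpha> \<Longrightarrow> is_comp (drop j \<alpha>)"
  unfolding is_comp_def by (meson in_set_dropD)

lemma coprodM_eval:
  assumes a: "is_comp \<alpha>"
  shows "coprodM \<alpha> (e1, e2) = (if finite (supp e1) \<and> finite (supp e2) \<and> \<alpha> = nz e1 @ nz e2 then 1 else 0)"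
proof -
  let ?P = "finite (supp e1) \<and> finite (supp e2) \<and> \<alpha> = nz e1 @ nz e2"
  have "coprodM \<alpha> (e1, e2) = (\<Sum>j\<le>length \<alpha>. M (take j \<alpha>) e1 * M (drop j \<alpha>) e2)"
    unfolding coprodM_def tens_def by simp
  also have "\<dots> = (\<Sum>j\<le>length \<alpha>. if j = length (nz e1) then (if ?P then 1 else 0) else 0)"
  proof (rule sum.cong[OF refl])
    fix j assume j: "j \<in> {..length \<alpha>}"
    have "M (take j \<alpha>) e1 * M (drop j \<alpha>) e2
        = (if finite (supp e1) \<and> take j \<alpha> = nz e1 then 1 else 0) * (if finite (supp e2) \<and> drop j \<alpha> = nz e2 then 1 else 0)"
      using M_eq[OF is_comp_take[OF a, of j], of e1] M_eq[OF is_comp_drop[OF a, of j], of e2] by simp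
    also have "\<dots> = (if j = length (nz e1) then (if ?P then 1 else 0) else 0)"
    proof (cases "take j \<alpha> = nz e1 \<and> drop j \<alpha> = nz e2")
      case True
      then have "\<alpha> = nz e1 @ nz e2" by (metis append_take_drop_id)
      moreover have "j = length (nz e1)" using True j by (metis length_take min_absorb2 atMost_iff)
      ultimately show ?thesis using True by simp
    next
      case False
      have "\<not> (j = length (nz e1) \<and> \<alpha> = nz e1 @ nz e2)"
      proof
        assume "j = length (nz e1) \<and> \<alpha> = nz e1 @ nz e2"
        then show False using False by simp
      qed
      then show ?thesis using False by auto
    qed
    finally show "M (take j \<alpha>) e1 * M (drop j \<alpha>) e2 = (if j = length (nz e1) then (if ?P then 1 else 0) else 0)" .
  qed
  also have "\<dots> = (if length (nz e1) \<le> length \<alpha> then (if ?P then 1 else 0) else 0)"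
    by (simp add: sum.delta)
  also have "\<dots> = (if ?P then 1 else 0)" by auto
  finally show ?thesis .
qed

lemma qcoprod_L:
  assumes I: "I \<subseteq> {1..<n}"
  shows "qcoprod (Lfun n I) = (\<lambda>p. \<Sum>J\<in>{J. I \<subseteq> J \<and> J \<subseteq> {1..<n}}. coprodM (comp n J) p)"
proof -
  let ?SJ = "{J. I \<subseteq> J \<and> J \<subseteq> {1..<n}}"
  have finSJ: "finite ?SJ" by (rule finite_subset[of _ "Pow {1..<n}"]) auto
  have inj: "inj_on (comp n) ?SJ" by (rule inj_onI) (use comp_unique in blast)
  have ic: "\<forall>\<alpha>\<in>comp n ` ?SJ. is_comp \<alpha>" using is_comp_comp by blast
  have L: "Lfun n I = (\<lambda>e. \<Sum>\<alpha>\<in>comp n ` ?SJ. 1 * M \<alpha> e)"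
  proof
    fix e
    have "(\<Sum>\<alpha>\<in>comp n ` ?SJ. 1 * M \<alpha> e) = (\<Sum>J\<in>?SJ. 1 * M (comp n J) e)"
      by (rule sum.reindex_cong[OF inj refl refl])
    then show "Lfun n I e = (\<Sum>\<alpha>\<in>comp n ` ?SJ. 1 * M \<alpha> e)" unfolding Lfun_def by simp
  qed
  have "qcoprod (Lfun n I) = (\<lambda>p. \<Sum>\<alpha>\<in>comp n ` ?SJ. 1 * coprodM \<alpha> p)"
    unfolding L by (rule qcoprod_eq[OF finite_imageI[OF finSJ] ic])
  also have "\<dots> = (\<lambda>p. \<Sum>J\<in>?SJ. coprodM (comp n J) p)"
  proof
    fix p
    have "(\<Sum>\<alpha>\<in>comp n ` ?SJ. 1 * coprodM \<alpha> p) = (\<Sum>J\<in>?SJ. 1 * coprodM (comp n J) p)"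
      by (rule sum.reindex_cong[OF inj refl refl])
    then show "(\<Sum>\<alpha>\<in>comp n ` ?SJ. 1 * coprodM \<alpha> p) = (\<Sum>J\<in>?SJ. coprodM (comp n J) p)" by simp
  qed
  finally show ?thesis .
qed

lemma is_comp_append: "is_comp a \<Longrightarrow> is_comp b \<Longrightarrow> is_comp (a @ b)"
  unfolding is_comp_def by auto

lemma partB:
  assumes nu: "1 < \<nu>" and I: "I \<subseteq> {1..<n}"
  shows "(\<lambda>p. \<Sum>k\<le>n. ch2 \<nu> k (n - k) (cop n k (chi \<nu> n I)) p) = qcoprod (Lfun n I)"
proof
  fix p
  obtain e1 e2 :: "nat \<Rightarrow> nat" where p: "p = (e1, e2)" by (cases p)
  let ?b1 = "nz e1" and ?b2 = "nz e2"
  let ?t1 = "sum_list ?b1" and ?t2 = "sum_list ?b2"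
  let ?P = "finite (supp e1) \<and> finite (supp e2) \<and> ?t1 + ?t2 = n \<and> I \<subseteq> psall (?b1 @ ?b2)"
  let ?SJ = "{J. I \<subseteq> J \<and> J \<subseteq> {1..<n}}"
  have finSJ: "finite ?SJ" by (rule finite_subset[of _ "Pow {1..<n}"]) auto
  have "(\<Sum>k\<le>n. ch2 \<nu> k (n - k) (cop n k (chi \<nu> n I)) p)
      = (\<Sum>k\<le>n. if k = ?t1 then (if ?P then 1 else 0) else 0)"
  proof (rule sum.cong[OF refl])
    fix k assume k: "k \<in> {..n}"
    have "ch2 \<nu> k (n - k) (cop n k (chi \<nu> n I)) p = Lfun k (I1 I k) e1 * Lfun (n - k) (I2 I k) e2"
      using ch2_cop[OF nu _ I, of k] k p by (simp add: tens_def)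
    also have "\<dots> = (if LCb k (I1 I k) e1 \<and> LCb (n - k) (I2 I k) e2 then 1 else 0)"
      using LL[OF I1_sub[OF I, of k], of e1] LL[OF I2_sub[OF I, of k], of e2] by simp
    also have "(LCb k (I1 I k) e1 \<and> LCb (n - k) (I2 I k) e2) \<longleftrightarrow> k = ?t1 \<and> ?P"
    proof -
      have "(LCb k (I1 I k) e1 \<and> LCb (n - k) (I2 I k) e2) \<longleftrightarrow>
          (finite (supp e1) \<and> ?t1 = k \<and> I1 I k \<subseteq> psall ?b1 \<and> finite (supp e2) \<and> ?t2 = n - k \<and> I2 I k \<subseteq> psall ?b2)"
        unfolding LCb_char by blast
      also have "\<dots> \<longleftrightarrow> k = ?t1 \<and> finite (supp e1) \<and> finite (supp e2) \<and> ?t1 + ?t2 = n \<and>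
          (I1 I ?t1 \<subseteq> psall ?b1 \<and> I2 I ?t1 \<subseteq> psall ?b2)"
        using k by auto
      also have "\<dots> \<longleftrightarrow> k = ?t1 \<and> ?P"
        using split_psall[of ?t1 ?b1 I ?b2] psall_append[of ?b1 ?b2] by simp
      finally show ?thesis .
    qed
    finally show "ch2 \<nu> k (n - k) (cop n k (chi \<nu> n I)) p = (if k = ?t1 then (if ?P then 1 else 0) else 0)"
      by simp
  qed
  also have "\<dots> = (if ?t1 \<le> n then (if ?P then 1 else 0) else 0)" by (simp add: sum.delta)
  also have "\<dots> = (if ?P then 1 else 0)" by auto
  also have "\<dots> = (\<Sum>J\<in>?SJ. coprodM (comp n J) p)"
  proof -
    have "(\<Sum>J\<in>?SJ. coprodM (comp n J) p)
        = (\<Sum>J\<in>?SJ. if finite (supp e1) \<and> finite (supp e2) \<and> comp n J = ?b1 @ ?b2 then 1 else 0)"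
      by (rule sum.cong[OF refl]) (use coprodM_eval is_comp_comp p in auto)
    also have "\<dots> = (if ?P then 1 else 0)"
    proof (cases "finite (supp e1) \<and> finite (supp e2) \<and> (\<exists>J\<in>?SJ. comp n J = ?b1 @ ?b2)")
      case True
      then obtain J0 where J0: "J0 \<in> ?SJ" "comp n J0 = ?b1 @ ?b2" by blast
      have "(\<Sum>J\<in>?SJ. if finite (supp e1) \<and> finite (supp e2) \<and> comp n J = ?b1 @ ?b2 then 1 else 0)
          = (\<Sum>J\<in>?SJ. if J = J0 then 1 else (0::complex))"
      proof (rule sum.cong[OF refl])
        fix J assume J: "J \<in> ?SJ"
        have "comp n J = ?b1 @ ?b2 \<longleftrightarrow> J = J0" using comp_unique[of J n J0] J J0 by auto
        then show "(if finite (supp e1) \<and> finite (supp e2) \<and> comp n J = ?b1 @ ?b2 then 1 else 0)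
          = (if J = J0 then 1 else (0::complex))" using True by simp
      qed
      also have "\<dots> = 1" using J0(1) finSJ by (simp add: sum.delta)
      finally have s1: "(\<Sum>J\<in>?SJ. if finite (supp e1) \<and> finite (supp e2) \<and> comp n J = ?b1 @ ?b2 then 1 else 0) = (1::complex)" .
      have "sum_list (?b1 @ ?b2) = n \<and> I \<subseteq> psall (?b1 @ ?b2)"
        using comp_exists[OF I is_comp_append[OF is_comp_nz is_comp_nz]] True by blast
      then have "?P" using True by simp
      then show ?thesis using s1 by simp
    next
      case False
      have "(\<Sum>J\<in>?SJ. if finite (supp e1) \<and> finite (supp e2) \<and> comp n J = ?b1 @ ?b2 then 1 else 0) = (0::complex)"
        by (rule sum.neutral) (use False in auto)
      moreover have "\<not> ?P"
      proof
        assume P: ?P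
        then have "sum_list (?b1 @ ?b2) = n \<and> I \<subseteq> psall (?b1 @ ?b2)" by simp
        then have "\<exists>J. I \<subseteq> J \<and> J \<subseteq> {1..<n} \<and> comp n J = ?b1 @ ?b2"
          using comp_exists[OF I is_comp_append[OF is_comp_nz is_comp_nz]] by blast
        then show False using False P by auto
      qed
      ultimately show ?thesis by simp
    qed
    finally show ?thesis by simp
  qed
  also have "\<dots> = qcoprod (Lfun n I) p" using qcoprod_L[OF I] by simp
  finally show "(\<Sum>k\<le>n. ch2 \<nu> k (n - k) (cop n k (chi \<nu> n I)) p) = qcoprod (Lfun n I) p" .
qed

theorem lemma3p10:
  fixes \<nu> m n :: nat
  assumes "\<nu> > 1"
  shows "(\<forall>I J. I \<subseteq> {1..<m} \<and> J \<subseteq> {1..<n} \<longrightarrow>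
            ch \<nu> (m + n) (mprod \<nu> m n (chi \<nu> m I) (chi \<nu> n J)) = qmult (Lfun m I) (Lfun n J))
       \<and> (\<forall>I. I \<subseteq> {1..<n} \<longrightarrow>
            (\<lambda>p. \<Sum>k\<le>n. ch2 \<nu> k (n - k) (cop n k (chi \<nu> n I)) p) = qcoprod (Lfun n I))"
  using partA[OF assms] partB[OF assms] by blast

end
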